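(* Let $\gamma>\frac d2$, $T>0$, $0<\tau\le1$, $n\ge0$ with $t_{n+1}\le T$ where $t_n=n\tau$. Let $u$ solve $i\partial_tu+\Delta u+|u|^2u=0$ on $[0,T]\times\mathbb T^d$, let $v(t)=\mathrm e^{-it\Delta}u(t)$, and assume $v\in L^\infty((0,T);H^{\gamma+2}(\mathbb T^d))$. Define $$I_1=i\int_0^\tau\mathrm e^{-i(t_n+s)\Delta}\Big(\big|\mathrm e^{i(t_n+s)\Delta}v(t_n)\big|^2\mathrm e^{i(t_n+s)\Delta}v(t_n)\Big)ds,$$ $$I_2=-\int_0^\tau s\,\mathrm e^{-i(t_n+s)\Delta}\Big(\big|\mathrm e^{i(t_n+s)\Delta}v(t_n)\big|^4\mathrm e^{i(t_n+s)\Delta}v(t_n)\Big)ds,$$ and $\mathcal R_4^n(v)=v(t_{n+1})-v(t_n)-I_1-I_2$. Then $\|\mathcal R_4^n(v)\|_{H^\gamma}\le C\tau^3$, where $C$ depends only on $\|v\|_{L^\infty((0,T);H^{\gamma+2})}$.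
   Context: $\mathbb T=(0,2\pi)$ periodic. $\mathrm e^{it\Delta}$ is the Fourier multiplier multiplying the $\boldsymbol\xi$-th Fourier coefficient by $\mathrm e^{-it|\boldsymbol\xi|^2}$. $\|f\|_{H^s}=\|(1-\Delta)^{s/2}f\|_{L^2}$. *)

theory Defs
  imports "HOL-Analysis.Analysis"
begin

text \<open>Functions on the torus (0,2pi)^d are represented by their Fourier coefficients:
  f(x) = sum over xi in Z^d of f xi * e^(i xi.x). The dimension d is the finite index type 'd.\<close>

type_synonym 'd fcoef = "int^'d \<Rightarrow> complex"

definition sqn :: "int^'d \<Rightarrow> real" where
  "sqn \<xi> = (\<Sum>i\<in>UNIV. (real_of_int (\<xi> $ i))^2)"

text \<open>Schroedinger group e^(it Delta): multiplies the xi-th coefficient by e^(-it|xi|^2).\<close>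
definition schr :: "real \<Rightarrow> ('d::finite) fcoef \<Rightarrow> 'd fcoef" where
  "schr t f = (\<lambda>\<xi>. cis (- t * sqn \<xi>) * f \<xi>)"

text \<open>Fourier coefficients of a product (convolution) and of the complex conjugate.\<close>
definition conv :: "('d::finite) fcoef \<Rightarrow> 'd fcoef \<Rightarrow> 'd fcoef" where
  "conv f g = (\<lambda>\<xi>. \<Sum>\<^sub>\<infinity>\<eta>. f \<eta> * g (\<xi> - \<eta>))"

definition cconj :: "('d::finite) fcoef \<Rightarrow> 'd fcoef" where
  "cconj f = (\<lambda>\<xi>. cnj (f (- \<xi>)))"

definition cubic :: "('d::finite) fcoef \<Rightarrow> 'd fcoef" where
  "cubic f = conv (conv f (cconj f)) f"

definition quintic :: "('d::finite) fcoef \<Rightarrow> 'd fcoef" where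
  "quintic f = conv (conv (conv (conv f (cconj f)) f) (cconj f)) f"

text \<open>Sobolev space H^s(T^d) and its norm ||(1-Delta)^(s/2) f||_{L^2((0,2pi)^d)} (Parseval).\<close>
definition in_H :: "real \<Rightarrow> ('d::finite) fcoef \<Rightarrow> bool" where
  "in_H s f \<longleftrightarrow> (\<lambda>\<xi>. (1 + sqn \<xi>) powr s * (cmod (f \<xi>))^2) summable_on UNIV"

definition normH :: "real \<Rightarrow> ('d::finite) fcoef \<Rightarrow> real" where
  "normH s f = (2 * pi) powr (real CARD('d) / 2) *
     sqrt (\<Sum>\<^sub>\<infinity>\<xi>. (1 + sqn \<xi>) powr s * (cmod (f \<xi>))^2)"

text \<open>u solves i u_t + Delta u + |u|^2 u = 0 on [0,T] x T^d: for each t, u(t) has absolutely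
  summable Fourier coefficients (so u(t) is continuous and |u|^2 u is given by convolution),
  each coefficient is differentiable in t on [0,T], and the equation holds coefficientwise.\<close>
definition nls_solution :: "real \<Rightarrow> (real \<Rightarrow> ('d::finite) fcoef) \<Rightarrow> bool" where
  "nls_solution T u \<longleftrightarrow>
     (\<forall>t\<in>{0..T}. (\<lambda>\<xi>. cmod (u t \<xi> :: complex)) summable_on UNIV) \<and>
     (\<forall>\<xi>. \<forall>t\<in>{0..T}. \<exists>D::complex. ((\<lambda>s. u s \<xi>) has_vector_derivative D) (at t within {0..T}) \<and>
         \<i> * D - complex_of_real (sqn \<xi>) * u t \<xi> + cubic (u t) \<xi> = 0)"

definition I1 :: "real \<Rightarrow> nat \<Rightarrow> (real \<Rightarrow> ('d::finite) fcoef) \<Rightarrow> 'd fcoef" where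
  "I1 \<tau> n v = (\<lambda>\<xi>. \<i> * integral {0..\<tau>}
      (\<lambda>s. schr (- (real n * \<tau> + s)) (cubic (schr (real n * \<tau> + s) (v (real n * \<tau>)))) \<xi>))"

definition I2 :: "real \<Rightarrow> nat \<Rightarrow> (real \<Rightarrow> ('d::finite) fcoef) \<Rightarrow> 'd fcoef" where
  "I2 \<tau> n v = (\<lambda>\<xi>. - integral {0..\<tau>}
      (\<lambda>s. complex_of_real s *
         schr (- (real n * \<tau> + s)) (quintic (schr (real n * \<tau> + s) (v (real n * \<tau>)))) \<xi>))"

definition R4 :: "real \<Rightarrow> nat \<Rightarrow> (real \<Rightarrow> ('d::finite) fcoef) \<Rightarrow> 'd fcoef" where
  "R4 \<tau> n v = (\<lambda>\<xi>. v (real (Suc n) * \<tau>) \<xi> - v (real n * \<tau>) \<xi> - I1 \<tau> n v \<xi> - I2 \<tau> n v \<xi>)"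

end

theory Submission
  imports Defs
begin


definition wt :: "real \<Rightarrow> int^'d \<Rightarrow> real" where
  "wt s \<xi> = (1 + sqn \<xi>) powr s"

definition hQ :: "real \<Rightarrow> ('d::finite) fcoef \<Rightarrow> real" where
  "hQ s f = (\<Sum>\<^sub>\<infinity>\<xi>. wt s \<xi> * (cmod (f \<xi>))^2)"

definition hn :: "real \<Rightarrow> ('d::finite) fcoef \<Rightarrow> real" where
  "hn s f = sqrt (hQ s f)"

lemma sqn_nonneg[simp]: "sqn \<xi> \<ge> 0"
  unfolding sqn_def by (simp add: sum_nonneg)

lemma wt_pos[simp]: "wt s \<xi> > 0"
proof -
  have "1 + sqn \<xi> > 0" using sqn_nonneg[of \<xi>] by linarith
  then show ?thesis unfolding wt_def by simp
qed

lemma wt_nonneg[simp]: "wt s \<xi> \<ge> 0"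
  using wt_pos[of s \<xi>] by linarith

lemma wt_ge1: "s \<ge> 0 \<Longrightarrow> wt s \<xi> \<ge> 1"
  unfolding wt_def using sqn_nonneg[of \<xi>] by (simp add: ge_one_powr_ge_zero)

lemma wt_mono: "s \<le> s' \<Longrightarrow> wt s \<xi> \<le> wt s' \<xi>"
  unfolding wt_def using sqn_nonneg[of \<xi>] by (intro powr_mono) auto

lemma wt_add: "wt (s + s') \<xi> = wt s \<xi> * wt s' \<xi>"
  unfolding wt_def using sqn_nonneg[of \<xi>] by (simp add: powr_add)

lemma in_H_iff: "in_H s f \<longleftrightarrow> (\<lambda>\<xi>. wt s \<xi> * (cmod (f \<xi>))^2) summable_on UNIV"
  unfolding in_H_def wt_def ..

lemma normH_hn: "normH s f = (2 * pi) powr (real CARD('d) / 2) * hn s (f :: 'd::finite fcoef)"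
  unfolding normH_def hn_def hQ_def wt_def ..

lemma hQ_nonneg: "hQ s f \<ge> 0"
  unfolding hQ_def by (intro infsum_nonneg) auto

lemma hn_nonneg[simp]: "hn s f \<ge> 0"
  unfolding hn_def using hQ_nonneg by simp

lemma sum_L2: "(\<Sum>\<xi>\<in>F. wt s \<xi> * (cmod (f \<xi>))^2) = (L2_set (\<lambda>\<xi>. sqrt (wt s \<xi>) * cmod (f \<xi>)) F)^2"
  unfolding L2_set_def by (simp add: sum_nonneg power_mult_distrib)

lemma H_finI:
  assumes "B \<ge> 0" "\<And>F. finite F \<Longrightarrow> L2_set (\<lambda>\<xi>. sqrt (wt s \<xi>) * cmod (f \<xi>)) F \<le> B"
  shows "in_H s f" "hn s f \<le> B"
proof -
  have b: "(\<Sum>\<xi>\<in>F. wt s \<xi> * (cmod (f \<xi>))^2) \<le> B^2" if "finite F" for F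
    unfolding sum_L2 using assms(2)[OF that] by (intro power_mono) auto
  have s: "(\<lambda>\<xi>. wt s \<xi> * (cmod (f \<xi>))^2) summable_on UNIV"
    by (rule nonneg_bdd_above_summable_on) (auto intro!: bdd_aboveI[where M="B^2"] b)
  then show "in_H s f" unfolding in_H_iff .
  have "hQ s f \<le> B^2" unfolding hQ_def
    by (rule infsum_le_finite_sums[OF s]) (use b in auto)
  then have "sqrt (hQ s f) \<le> sqrt (B^2)" by (rule real_sqrt_le_mono)
  then show "hn s f \<le> B" unfolding hn_def using assms(1) by simp
qed

lemma H_fin_le:
  assumes "in_H s f"
  shows "L2_set (\<lambda>\<xi>. sqrt (wt s \<xi>) * cmod (f \<xi>)) F \<le> hn s f"
proof (cases "finite F")
  case True
  have "(\<Sum>\<xi>\<in>F. wt s \<xi> * (cmod (f \<xi>))^2) \<le> hQ s f" unfolding hQ_def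
    by (rule finite_sum_le_infsum) (use assms True in \<open>auto simp: in_H_iff\<close>)
  then have "(L2_set (\<lambda>\<xi>. sqrt (wt s \<xi>) * cmod (f \<xi>)) F)^2 \<le> hQ s f" by (simp add: sum_L2)
  then show ?thesis unfolding hn_def by (simp add: real_le_rsqrt)
qed simp

lemma H_dom2:
  assumes g: "in_H s g" and h: "in_H s h" and ab: "a \<ge> 0" "b \<ge> 0"
    and le: "\<And>\<xi>. cmod (f \<xi>) \<le> a * cmod (g \<xi>) + b * cmod (h \<xi>)"
  shows "in_H s f" "hn s f \<le> a * hn s g + b * hn s h"
proof -
  have L: "L2_set (\<lambda>\<xi>. sqrt (wt s \<xi>) * cmod (f \<xi>)) F \<le> a * hn s g + b * hn s h" for F
  proof -
    have "L2_set (\<lambda>\<xi>. sqrt (wt s \<xi>) * cmod (f \<xi>)) F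
        \<le> L2_set (\<lambda>\<xi>. a * (sqrt (wt s \<xi>) * cmod (g \<xi>)) + b * (sqrt (wt s \<xi>) * cmod (h \<xi>))) F"
    proof (rule L2_set_mono)
      fix \<xi>
      have "sqrt (wt s \<xi>) * cmod (f \<xi>) \<le> sqrt (wt s \<xi>) * (a * cmod (g \<xi>) + b * cmod (h \<xi>))"
        by (rule mult_left_mono[OF le]) simp
      then show "sqrt (wt s \<xi>) * cmod (f \<xi>) \<le> a * (sqrt (wt s \<xi>) * cmod (g \<xi>)) + b * (sqrt (wt s \<xi>) * cmod (h \<xi>))"
        by (simp add: algebra_simps)
      show "0 \<le> sqrt (wt s \<xi>) * cmod (f \<xi>)" by simp
    qed
    also have "\<dots> \<le> L2_set (\<lambda>\<xi>. a * (sqrt (wt s \<xi>) * cmod (g \<xi>))) F + L2_set (\<lambda>\<xi>. b * (sqrt (wt s \<xi>) * cmod (h \<xi>))) F"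
      by (rule L2_set_triangle_ineq)
    also have "\<dots> = a * L2_set (\<lambda>\<xi>. sqrt (wt s \<xi>) * cmod (g \<xi>)) F + b * L2_set (\<lambda>\<xi>. sqrt (wt s \<xi>) * cmod (h \<xi>)) F"
      using ab by (simp add: L2_set_right_distrib)
    also have "\<dots> \<le> a * hn s g + b * hn s h"
      using ab H_fin_le[OF g] H_fin_le[OF h] by (intro add_mono mult_left_mono) auto
    finally show ?thesis .
  qed
  have "a * hn s g + b * hn s h \<ge> 0" using ab by simp
  then show "in_H s f" "hn s f \<le> a * hn s g + b * hn s h" using H_finI[OF _ L] by auto
qed

lemma H_dom1:
  assumes g: "in_H s g" and a: "a \<ge> 0"
    and le: "\<And>\<xi>. cmod (f \<xi>) \<le> a * cmod (g \<xi>)"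
  shows "in_H s f" "hn s f \<le> a * hn s g"
  using H_dom2[OF g g a order_refl, of f] le by auto

lemma H_zero: "in_H s (\<lambda>_. 0)" "hn s (\<lambda>_. 0) = 0"
  unfolding in_H_iff hn_def hQ_def by auto



lemma int_weight_summable:
  fixes p :: real
  assumes p: "p > 1/2"
  shows "(\<lambda>k::int. (1 + (real_of_int k)^2) powr (-p)) summable_on UNIV"
proof -
  define h where "h = (\<lambda>k::int. (1 + (real_of_int k)^2) powr (-p))"
  have hnn: "h k \<ge> 0" for k unfolding h_def by simp
  have sn: "summable (\<lambda>n::nat. real n powr (-(2*p)))"
    using p by (subst summable_real_powr_iff) auto
  have le: "h (int n) \<le> real n powr (-(2*p))" if "n \<ge> 1" for n
  proof -
    have "h (int n) = (1 + (real n)^2) powr (-p)" unfolding h_def by simp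
    also have "\<dots> \<le> ((real n)^2) powr (-p)"
      using p that by (intro powr_mono2') (auto simp: add_pos_nonneg)
    also have "\<dots> = real n powr (-(2*p))"
    proof -
      have "((real n)^2) powr (-p) = (real n powr 2) powr (-p)"
        using that by (simp add: powr_numeral)
      also have "\<dots> = real n powr (2 * (-p))" by (rule powr_powr)
      also have "\<dots> = real n powr (-(2*p))" by simp
      finally show ?thesis .
    qed
    finally show ?thesis .
  qed
  have le2: "h (- int n) = h (int n)" for n unfolding h_def by simp
  have s1: "summable (\<lambda>n. h (int n))"
    by (rule summable_comparison_test'[OF sn, of 1]) (use le hnn in auto)
  have s2: "summable (\<lambda>n. h (- int n))" using s1 le2 by simp
  have a1: "(h \<circ> int) summable_on UNIV"
    using s1 hnn by (subst summable_on_UNIV_nonneg_real_iff) (auto simp: o_def)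
  have a2: "(h \<circ> (\<lambda>n. - int n)) summable_on UNIV"
    using s2 hnn by (subst summable_on_UNIV_nonneg_real_iff) (auto simp: o_def)
  have b1: "h summable_on (range int)"
    by (subst summable_on_reindex) (use a1 in \<open>auto simp: inj_on_def\<close>)
  have b2: "h summable_on (range (\<lambda>n. - int n))"
    by (subst summable_on_reindex) (use a2 in \<open>auto simp: inj_on_def\<close>)
  have U: "(UNIV::int set) = range int \<union> range (\<lambda>n. - int n)"
  proof -
    have "k \<in> range int \<union> range (\<lambda>n. - int n)" for k :: int
    proof (cases "k \<ge> 0")
      case True then have "k = int (nat k)" by simp
      then show ?thesis by blast
    next
      case False then have "k = - int (nat (-k))" by simp
      then show ?thesis by blast
    qed
    then show ?thesis by blast
  qed
  show ?thesis using summable_on_union[OF b1 b2] U unfolding h_def by simp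
qed


lemma prod_summable:
  fixes h :: "int \<Rightarrow> real"
  assumes hnn: "\<And>k. h k \<ge> 0" and hs: "h summable_on UNIV"
  shows "(\<lambda>\<xi>::int^'d. \<Prod>i\<in>UNIV. h (\<xi> $ i)) summable_on UNIV"
proof (rule nonneg_bdd_above_summable_on)
  show "0 \<le> (\<Prod>i\<in>UNIV. h (\<xi> $ i))" for \<xi> :: "int^'d" by (simp add: prod_nonneg hnn)
  show "bdd_above (sum (\<lambda>\<xi>::int^'d. \<Prod>i\<in>UNIV. h (\<xi> $ i)) ` {F. F \<subseteq> UNIV \<and> finite F})"
  proof (rule bdd_aboveI2)
    fix F :: "(int^'d) set" assume "F \<in> {F. F \<subseteq> UNIV \<and> finite F}"
    then have fin: "finite F" by simp
    define P where "P = (\<lambda>i. (\<lambda>\<xi>. \<xi> $ i) ` F)"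
    have finP: "finite (P i)" for i unfolding P_def using fin by simp
    have sub: "F \<subseteq> vec_lambda ` (PiE UNIV P)"
    proof
      fix \<xi> assume "\<xi> \<in> F"
      then have "vec_nth \<xi> \<in> PiE UNIV P" unfolding P_def by auto
      moreover have "\<xi> = vec_lambda (vec_nth \<xi>)" by simp
      ultimately show "\<xi> \<in> vec_lambda ` (PiE UNIV P)" by blast
    qed
    have finPi: "finite (PiE (UNIV::'d set) P)" using finP by (intro finite_PiE) auto
    have inj: "inj_on vec_lambda (PiE (UNIV::'d set) P)"
      by (rule inj_onI) (metis vec_lambda_inverse UNIV_I)
    have "(\<Sum>\<xi>\<in>F. \<Prod>i\<in>UNIV. h (\<xi> $ i)) \<le> (\<Sum>\<xi>\<in>vec_lambda ` (PiE UNIV P). \<Prod>i\<in>UNIV. h (\<xi> $ i))"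
      using sub finPi by (intro sum_mono2) (auto simp: prod_nonneg hnn)
    also have "\<dots> = (\<Sum>g\<in>PiE UNIV P. \<Prod>i\<in>UNIV. h (g i))"
      by (subst sum.reindex[OF inj]) simp
    also have "\<dots> = (\<Prod>i\<in>UNIV. \<Sum>k\<in>P i. h k)"
      using finP by (subst prod_sum_PiE) auto
    also have "\<dots> \<le> (\<Prod>i\<in>(UNIV::'d set). infsum h UNIV)"
      by (intro prod_mono conjI sum_nonneg finite_sum_le_infsum hs finP) (auto simp: hnn)
    finally show "(\<Sum>\<xi>\<in>F. \<Prod>i\<in>UNIV. h (\<xi> $ i)) \<le> (\<Prod>i\<in>(UNIV::'d set). infsum h UNIV)" .
  qed
qed

lemma wt_neg_summable:
  assumes r: "r > real CARD('d::finite) / 2"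
  shows "(\<lambda>\<xi>::int^'d. wt (-r) \<xi>) summable_on UNIV"
proof -
  define d where "d = real CARD('d)"
  have d0: "d > 0" unfolding d_def by simp
  define h where "h = (\<lambda>k::int. (1 + (real_of_int k)^2) powr (-(r/d)))"
  have hs: "h summable_on UNIV" unfolding h_def
  proof (rule int_weight_summable)
    have "d/2 < r" using r unfolding d_def .
    then have "(d/2)/d < r/d" by (rule divide_strict_right_mono) (use d0 in simp)
    then show "1/2 < r/d" using d0 by simp
  qed
  have ps: "(\<lambda>\<xi>::int^'d. \<Prod>i\<in>UNIV. h (\<xi> $ i)) summable_on UNIV"
    by (rule prod_summable[OF _ hs]) (simp add: h_def)
  have le: "wt (-r) \<xi> \<le> (\<Prod>i\<in>UNIV. h (\<xi> $ i))" for \<xi> :: "int^'d"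
  proof -
    have each: "1 + (real_of_int (\<xi>$i))^2 \<le> 1 + sqn \<xi>" for i
      unfolding sqn_def by (simp, intro member_le_sum) auto
    have "(\<Prod>i\<in>(UNIV::'d set). 1 + (real_of_int (\<xi>$i))^2) \<le> (\<Prod>i\<in>(UNIV::'d set). 1 + sqn \<xi>)"
      using each by (intro prod_mono) (auto simp: add_nonneg_nonneg)
    also have "\<dots> = (1 + sqn \<xi>) ^ CARD('d)" by simp
    finally have P: "(\<Prod>i\<in>(UNIV::'d set). 1 + (real_of_int (\<xi>$i))^2) \<le> (1 + sqn \<xi>) ^ CARD('d)" .
    have pos: "(\<Prod>i\<in>(UNIV::'d set). 1 + (real_of_int (\<xi>$i))^2) > 0"
      by (intro prod_pos) (auto simp: add_pos_nonneg)
    have s0: "1 + sqn \<xi> > 0" using sqn_nonneg[of \<xi>] by linarith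
    have "wt (-r) \<xi> = ((1 + sqn \<xi>) ^ CARD('d)) powr (-(r/d))"
    proof -
      have "((1 + sqn \<xi>) ^ CARD('d)) = (1 + sqn \<xi>) powr d"
        unfolding d_def using s0 by (rule powr_realpow[symmetric])
      then have "((1 + sqn \<xi>) ^ CARD('d)) powr (-(r/d)) = (1 + sqn \<xi>) powr (d * (-(r/d)))"
        by (simp add: powr_powr)
      also have "d * (-(r/d)) = -r" using d0 by simp
      finally show ?thesis unfolding wt_def by simp
    qed
    also have "\<dots> \<le> (\<Prod>i\<in>(UNIV::'d set). 1 + (real_of_int (\<xi>$i))^2) powr (-(r/d))"
    proof (rule powr_mono2')
      have "r > 0" using r d0 unfolding d_def by simp
      then show "-(r/d) \<le> 0" using d0 by simp
    qed (use P pos in auto)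
    also have "\<dots> = (\<Prod>i\<in>UNIV. h (\<xi> $ i))" unfolding h_def by (simp add: prod_powr_distrib)
    finally show ?thesis .
  qed
  show ?thesis
    by (rule summable_on_comparison_test[OF ps]) (use le in auto)
qed

definition Wc :: "real \<Rightarrow> ('d::finite) itself \<Rightarrow> real" where
  "Wc s (_::('d::finite) itself) = infsum (\<lambda>\<xi>::int^'d. wt (-s) \<xi>) UNIV"

lemma Wc_nonneg: "Wc s TYPE('d::finite) \<ge> 0"
  unfolding Wc_def by (intro infsum_nonneg) auto

lemma l1_bound:
  assumes s: "s > real CARD('d::finite) / 2" and f: "in_H s (f :: 'd fcoef)"
  shows "(\<lambda>\<xi>. cmod (f \<xi>)) summable_on UNIV"
    "infsum (\<lambda>\<xi>. cmod (f \<xi>)) UNIV \<le> sqrt (Wc s TYPE('d)) * hn s f"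
proof -
  have ws: "(\<lambda>\<xi>::int^'d. wt (-s) \<xi>) summable_on UNIV" by (rule wt_neg_summable[OF s])
  have b: "(\<Sum>\<xi>\<in>F. cmod (f \<xi>)) \<le> sqrt (Wc s TYPE('d)) * hn s f" if "finite F" for F
  proof -
    have e: "cmod (f \<xi>) = sqrt (wt (-s) \<xi>) * (sqrt (wt s \<xi>) * cmod (f \<xi>))" for \<xi>
    proof -
      have "wt (-s) \<xi> * wt s \<xi> = 1" using wt_add[of "-s" s \<xi>] sqn_nonneg[of \<xi>] by (auto simp: wt_def split: if_splits)
      then have "sqrt (wt (-s) \<xi>) * sqrt (wt s \<xi>) = 1"
        by (simp add: real_sqrt_mult[symmetric])
      then show ?thesis by (metis mult.assoc mult_1)
    qed
    have "(\<Sum>\<xi>\<in>F. cmod (f \<xi>)) = (\<Sum>\<xi>\<in>F. \<bar>sqrt (wt (-s) \<xi>)\<bar> * \<bar>sqrt (wt s \<xi>) * cmod (f \<xi>)\<bar>)"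
      by (subst e) simp
    also have "\<dots> \<le> L2_set (\<lambda>\<xi>. sqrt (wt (-s) \<xi>)) F * L2_set (\<lambda>\<xi>. sqrt (wt s \<xi>) * cmod (f \<xi>)) F"
      by (rule L2_set_mult_ineq)
    also have "\<dots> \<le> sqrt (Wc s TYPE('d)) * hn s f"
    proof (intro mult_mono H_fin_le f)
      have "(\<Sum>\<xi>\<in>F. (sqrt (wt (-s) \<xi>))^2) = (\<Sum>\<xi>\<in>F. wt (-s) \<xi>)" by simp
      also have "\<dots> \<le> Wc s TYPE('d)" unfolding Wc_def
        by (rule finite_sum_le_infsum[OF ws that]) auto
      finally show "L2_set (\<lambda>\<xi>. sqrt (wt (-s) \<xi>)) F \<le> sqrt (Wc s TYPE('d))"
        unfolding L2_set_def by (rule real_sqrt_le_mono)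
    qed (auto simp: Wc_nonneg)
    finally show ?thesis .
  qed
  show sm: "(\<lambda>\<xi>. cmod (f \<xi>)) summable_on UNIV"
    by (rule nonneg_bdd_above_summable_on) (auto intro!: bdd_aboveI2 b)
  show "infsum (\<lambda>\<xi>. cmod (f \<xi>)) UNIV \<le> sqrt (Wc s TYPE('d)) * hn s f"
    by (rule infsum_le_finite_sums[OF sm]) (use b in auto)
qed

lemma pt_bound:
  assumes s: "s \<ge> 0" and f: "in_H s f"
  shows "cmod (f \<xi>) \<le> hn s f"
proof -
  have "cmod (f \<xi>) \<le> sqrt (wt s \<xi>) * cmod (f \<xi>)"
    using wt_ge1[OF s, of \<xi>] by (simp add: mult_le_cancel_right1)
  also have "\<dots> = L2_set (\<lambda>\<xi>. sqrt (wt s \<xi>) * cmod (f \<xi>)) {\<xi>}"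
    by (simp add: L2_set_def)
  also have "\<dots> \<le> hn s f" by (rule H_fin_le[OF f])
  finally show ?thesis .
qed


lemma in_H_mono:
  assumes "in_H s' f" "s \<le> s'"
  shows "in_H s f" "hn s f \<le> hn s' f"
proof -
  have L: "L2_set (\<lambda>\<xi>. sqrt (wt s \<xi>) * cmod (f \<xi>)) F \<le> hn s' f" for F
  proof -
    have "L2_set (\<lambda>\<xi>. sqrt (wt s \<xi>) * cmod (f \<xi>)) F \<le> L2_set (\<lambda>\<xi>. sqrt (wt s' \<xi>) * cmod (f \<xi>)) F"
      by (intro L2_set_mono mult_right_mono real_sqrt_le_mono wt_mono assms(2)) auto
    also have "\<dots> \<le> hn s' f" by (rule H_fin_le[OF assms(1)])
    finally show ?thesis .
  qed
  show "in_H s f" "hn s f \<le> hn s' f" using H_finI[OF hn_nonneg L] by auto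
qed



definition l1 :: "('d::finite) fcoef \<Rightarrow> bool" where
  "l1 f \<longleftrightarrow> (\<lambda>\<xi>. cmod (f \<xi>)) summable_on UNIV"

definition L1n :: "('d::finite) fcoef \<Rightarrow> real" where
  "L1n f = infsum (\<lambda>\<xi>. cmod (f \<xi>)) UNIV"

lemma L1n_nonneg: "L1n f \<ge> 0"
  unfolding L1n_def by (intro infsum_nonneg) auto

lemma l1_bnd: "l1 f \<Longrightarrow> cmod (f \<xi>) \<le> L1n f"
  unfolding l1_def L1n_def
  using finite_sum_le_infsum[of "\<lambda>\<xi>. cmod (f \<xi>)" UNIV "{\<xi>}"] by auto

lemma bij_minus_left: "bij_betw (\<lambda>\<zeta>::int^'d. \<xi> - \<zeta>) UNIV UNIV"
  by (rule bij_betwI[of _ _ _ "\<lambda>\<zeta>. \<xi> - \<zeta>"]) auto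

lemma bij_minus_right: "bij_betw (\<lambda>\<zeta>::int^'d. \<zeta> - \<eta>) UNIV UNIV"
  by (rule bij_betwI[of _ _ _ "\<lambda>\<zeta>. \<zeta> + \<eta>"]) auto

lemma bij_uminus: "bij_betw (\<lambda>\<zeta>::int^'d. - \<zeta>) UNIV UNIV"
  by (rule bij_betwI[of _ _ _ "\<lambda>\<zeta>. - \<zeta>"]) auto

lemma reflect_summable:
  fixes g :: "int^'d \<Rightarrow> 'a::{real_normed_vector}"
  shows "(\<lambda>\<zeta>. g (\<xi> - \<zeta>)) summable_on UNIV \<longleftrightarrow> g summable_on UNIV"
  using summable_on_reindex_bij_betw[OF bij_minus_left, of g \<xi>] by simp

lemma reflect_infsum:
  fixes g :: "int^'d \<Rightarrow> 'a::{real_normed_vector}"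
  shows "infsum (\<lambda>\<zeta>. g (\<xi> - \<zeta>)) UNIV = infsum g UNIV"
  using infsum_reindex_bij_betw[OF bij_minus_left, of g \<xi>] by simp

lemma shift_summable:
  fixes g :: "int^'d \<Rightarrow> 'a::{real_normed_vector}"
  shows "(\<lambda>\<zeta>. g (\<zeta> - \<eta>)) summable_on UNIV \<longleftrightarrow> g summable_on UNIV"
  using summable_on_reindex_bij_betw[OF bij_minus_right, of g \<eta>] by simp

lemma shift_infsum:
  fixes g :: "int^'d \<Rightarrow> 'a::{real_normed_vector}"
  shows "infsum (\<lambda>\<zeta>. g (\<zeta> - \<eta>)) UNIV = infsum g UNIV"
  using infsum_reindex_bij_betw[OF bij_minus_right, of g \<eta>] by simp

lemma neg_summable:
  fixes g :: "int^'d \<Rightarrow> 'a::{real_normed_vector}"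
  shows "(\<lambda>\<zeta>. g (- \<zeta>)) summable_on UNIV \<longleftrightarrow> g summable_on UNIV"
  using summable_on_reindex_bij_betw[OF bij_uminus, of g] by simp

lemma neg_infsum:
  fixes g :: "int^'d \<Rightarrow> 'a::{real_normed_vector}"
  shows "infsum (\<lambda>\<zeta>. g (- \<zeta>)) UNIV = infsum g UNIV"
  using infsum_reindex_bij_betw[OF bij_uminus, of g] by simp

lemma shift_fin_le:
  assumes "l1 g" "finite F"
  shows "(\<Sum>\<xi>\<in>F. cmod (g (\<xi> - \<eta>))) \<le> L1n g"
proof -
  have inj: "inj_on (\<lambda>\<xi>. \<xi> - \<eta>) F" by (auto simp: inj_on_def)
  have "(\<Sum>\<xi>\<in>F. cmod (g (\<xi> - \<eta>))) = (\<Sum>\<zeta>\<in>(\<lambda>\<xi>. \<xi> - \<eta>) ` F. cmod (g \<zeta>))"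
    by (simp add: sum.reindex[OF inj])
  also have "\<dots> \<le> L1n g" unfolding L1n_def
    by (rule finite_sum_le_infsum) (use assms in \<open>auto simp: l1_def\<close>)
  finally show ?thesis .
qed

lemma prod_abs_summable:
  fixes f g :: "('d::finite) fcoef"
  assumes f: "l1 f" and g: "\<And>x. cmod (g x) \<le> B"
  shows "(\<lambda>\<eta>. cmod (f \<eta>) * cmod (g (h \<eta>))) summable_on UNIV"
    "(\<lambda>\<eta>. f \<eta> * g (h \<eta>)) summable_on UNIV"
proof -
  have s: "(\<lambda>\<eta>. cmod (f \<eta>) * B) summable_on UNIV"
    using f unfolding l1_def by (rule summable_on_cmult_left)
  show a: "(\<lambda>\<eta>. cmod (f \<eta>) * cmod (g (h \<eta>))) summable_on UNIV"
    by (rule summable_on_comparison_test[OF s]) (auto intro: mult_left_mono g)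
  show "(\<lambda>\<eta>. f \<eta> * g (h \<eta>)) summable_on UNIV"
    by (rule abs_summable_summable) (use a in \<open>simp add: norm_mult\<close>)
qed

lemma prod_abs_summable':
  fixes f g :: "('d::finite) fcoef"
  assumes f: "l1 f" and g: "\<And>x. cmod (g x) \<le> B"
  shows "(\<lambda>\<eta>. cmod (g (h \<eta>)) * cmod (f \<eta>)) summable_on UNIV"
    "(\<lambda>\<eta>. g (h \<eta>) * f \<eta>) summable_on UNIV"
  using prod_abs_summable[OF assms, of h] by (simp_all add: mult.commute)

lemma conv_summable:
  assumes "l1 f" "l1 g"
  shows "(\<lambda>\<eta>. f \<eta> * g (\<xi> - \<eta>)) summable_on UNIV"
    "(\<lambda>\<eta>. cmod (f \<eta>) * cmod (g (\<xi> - \<eta>))) summable_on UNIV"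
  using prod_abs_summable[OF assms(1), of g "L1n g" "\<lambda>\<eta>. \<xi> - \<eta>"] l1_bnd[OF assms(2)] by auto

definition aconv :: "('d::finite) fcoef \<Rightarrow> 'd fcoef \<Rightarrow> int^'d \<Rightarrow> real" where
  "aconv f g \<xi> = (\<Sum>\<^sub>\<infinity>\<eta>. cmod (f \<eta>) * cmod (g (\<xi> - \<eta>)))"

lemma conv_le_aconv:
  assumes "l1 f" "l1 g"
  shows "cmod (conv f g \<xi>) \<le> aconv f g \<xi>"
  unfolding conv_def aconv_def
  by (rule norm_infsum_le[OF has_sum_infsum has_sum_infsum])
     (use conv_summable[OF assms] in \<open>auto simp: norm_mult\<close>)

lemma aconv_le:
  assumes "l1 f" "l1 g"
  shows "aconv f g \<xi> \<le> L1n f * L1n g"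
proof -
  have "aconv f g \<xi> \<le> (\<Sum>\<^sub>\<infinity>\<eta>. cmod (f \<eta>) * L1n g)" unfolding aconv_def
    by (rule infsum_mono) (use conv_summable[OF assms] assms(1) in
        \<open>auto simp: l1_def intro!: summable_on_cmult_left mult_left_mono l1_bnd[OF assms(2)]\<close>)
  also have "\<dots> = L1n f * L1n g" unfolding L1n_def by (rule infsum_cmult_left) (use assms in \<open>auto simp: l1_def\<close>)
  finally show ?thesis .
qed

lemma aconv_nonneg: "aconv f g \<xi> \<ge> 0"
  unfolding aconv_def by (intro infsum_nonneg) auto

lemma conv_bnd:
  assumes "l1 f" "l1 g"
  shows "cmod (conv f g \<xi>) \<le> L1n f * L1n g"
  using order_trans[OF conv_le_aconv[OF assms] aconv_le[OF assms]] .

lemma conv_comm: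
  "conv f g = conv g f"
proof
  fix \<xi>
  have "conv f g \<xi> = (\<Sum>\<^sub>\<infinity>\<eta>. f (\<xi> - \<eta>) * g (\<xi> - (\<xi> - \<eta>)))"
    unfolding conv_def by (rule reflect_infsum[symmetric, where g="\<lambda>\<eta>. f \<eta> * g (\<xi> - \<eta>)"])
  also have "\<dots> = conv g f \<xi>" unfolding conv_def by (simp add: mult.commute)
  finally show "conv f g \<xi> = conv g f \<xi>" .
qed

lemma conv_add_left:
  assumes "l1 f" "l1 g" "l1 h"
  shows "conv (\<lambda>x. f x + g x) h = (\<lambda>\<xi>. conv f h \<xi> + conv g h \<xi>)"
proof
  fix \<xi>
  show "conv (\<lambda>x. f x + g x) h \<xi> = conv f h \<xi> + conv g h \<xi>"
    unfolding conv_def distrib_right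
    by (rule infsum_add) (use conv_summable assms in auto)
qed

lemma conv_diff_left:
  assumes "l1 f" "l1 g" "l1 h"
  shows "conv (\<lambda>x. f x - g x) h = (\<lambda>\<xi>. conv f h \<xi> - conv g h \<xi>)"
proof
  fix \<xi>
  have "conv (\<lambda>x. f x - g x) h \<xi> = (\<Sum>\<^sub>\<infinity>\<eta>. f \<eta> * h (\<xi> - \<eta>) + (- (g \<eta> * h (\<xi> - \<eta>))))"
    unfolding conv_def by (simp add: algebra_simps)
  also have "\<dots> = conv f h \<xi> + (\<Sum>\<^sub>\<infinity>\<eta>. - (g \<eta> * h (\<xi> - \<eta>)))"
    unfolding conv_def
    by (rule infsum_add) (use conv_summable[OF assms(1,3)] summable_on_uminus[THEN iffD2, OF conv_summable(1)[OF assms(2,3)]] in auto)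
  also have "\<dots> = conv f h \<xi> - conv g h \<xi>" unfolding conv_def by (simp add: infsum_uminus)
  finally show "conv (\<lambda>x. f x - g x) h \<xi> = conv f h \<xi> - conv g h \<xi>" .
qed

lemma conv_cmult_left:
  "conv (\<lambda>x. c * f x) h = (\<lambda>\<xi>. c * conv f h \<xi>)"
  unfolding conv_def by (simp add: mult.assoc infsum_cmult_right')

lemma conv_cmult_right:
  "conv f (\<lambda>x. c * h x) = (\<lambda>\<xi>. c * conv f h \<xi>)"
  using conv_cmult_left[of c h f] by (simp add: conv_comm)

lemma conv_add_right:
  assumes "l1 f" "l1 g" "l1 h"
  shows "conv h (\<lambda>x. f x + g x) = (\<lambda>\<xi>. conv h f \<xi> + conv h g \<xi>)"
  using conv_add_left[OF assms] by (simp add: conv_comm)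

lemma conv_diff_right:
  assumes "l1 f" "l1 g" "l1 h"
  shows "conv h (\<lambda>x. f x - g x) = (\<lambda>\<xi>. conv h f \<xi> - conv h g \<xi>)"
  using conv_diff_left[OF assms] by (simp add: conv_comm)

lemma conv_assoc:
  assumes f: "l1 f" and g: "l1 g" and h: "l1 h"
  shows "conv (conv f g) h = conv f (conv g h)"
proof
  fix \<xi>
  have hr: "(\<lambda>\<zeta>. cmod (h (\<xi> - \<zeta>))) summable_on UNIV"
    using h unfolding l1_def by (subst reflect_summable[where g="\<lambda>x. cmod (h x)"])
  have P: "(\<lambda>(\<zeta>, \<eta>). f \<eta> * g (\<zeta> - \<eta>) * h (\<xi> - \<zeta>)) summable_on (UNIV \<times> UNIV)"
  proof -
    define Fp where "Fp = (\<lambda>(\<zeta>, \<eta>). f \<eta> * g (\<zeta> - \<eta>) * h (\<xi> - \<zeta>))"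
    have "(\<lambda>p. norm (Fp p)) summable_on Sigma UNIV (\<lambda>_. UNIV)"
    proof (rule iffD2[OF Infinite_Sum.abs_summable_on_Sigma_iff], intro conjI ballI)
      fix \<zeta>
      show "(\<lambda>\<eta>. norm (Fp (\<zeta>, \<eta>))) summable_on UNIV"
        using summable_on_cmult_left[OF conv_summable(2)[OF f g, of \<zeta>], of "cmod (h (\<xi> - \<zeta>))"]
        by (simp add: norm_mult Fp_def)
    next
      have e: "(\<Sum>\<^sub>\<infinity>\<eta>. norm (Fp (\<zeta>, \<eta>))) = aconv f g \<zeta> * cmod (h (\<xi> - \<zeta>))" for \<zeta>
        unfolding aconv_def Fp_def by (simp add: norm_mult infsum_cmult_left')
      have s: "(\<lambda>\<zeta>. (L1n f * L1n g) * cmod (h (\<xi> - \<zeta>))) summable_on UNIV"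
        using hr by (rule summable_on_cmult_right)
      show "(\<lambda>\<zeta>. norm (\<Sum>\<^sub>\<infinity>\<eta>. norm (Fp (\<zeta>, \<eta>)))) summable_on UNIV"
        unfolding e
        by (rule summable_on_comparison_test[OF s])
           (auto simp: abs_mult aconv_nonneg intro!: mult_right_mono aconv_le f g)
    qed
    then have "Fp summable_on Sigma UNIV (\<lambda>_. UNIV)"
      by (simp add: summable_on_iff_abs_summable_on_complex)
    then show ?thesis unfolding Fp_def by simp
  qed
  have "conv (conv f g) h \<xi> = (\<Sum>\<^sub>\<infinity>\<zeta>. \<Sum>\<^sub>\<infinity>\<eta>. f \<eta> * g (\<zeta> - \<eta>) * h (\<xi> - \<zeta>))"
    unfolding conv_def by (simp add: infsum_cmult_left')
  also have "\<dots> = (\<Sum>\<^sub>\<infinity>\<eta>. \<Sum>\<^sub>\<infinity>\<zeta>. f \<eta> * g (\<zeta> - \<eta>) * h (\<xi> - \<zeta>))"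
    by (rule infsum_swap_banach[OF P])
  also have "\<dots> = (\<Sum>\<^sub>\<infinity>\<eta>. f \<eta> * (\<Sum>\<^sub>\<infinity>\<zeta>. g (\<zeta> - \<eta>) * h (\<xi> - \<zeta>)))"
    by (simp add: mult.assoc infsum_cmult_right')
  also have "\<dots> = (\<Sum>\<^sub>\<infinity>\<eta>. f \<eta> * (\<Sum>\<^sub>\<infinity>\<mu>. g \<mu> * h ((\<xi> - \<eta>) - \<mu>)))"
  proof -
    have "(\<Sum>\<^sub>\<infinity>\<zeta>. g (\<zeta> - \<eta>) * h (\<xi> - \<zeta>)) = (\<Sum>\<^sub>\<infinity>\<mu>. g \<mu> * h ((\<xi> - \<eta>) - \<mu>))" for \<eta>
      using shift_infsum[of "\<lambda>\<mu>. g \<mu> * h ((\<xi> - \<eta>) - \<mu>)" \<eta>] by (simp add: algebra_simps)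
    then show ?thesis by simp
  qed
  also have "\<dots> = conv f (conv g h) \<xi>" unfolding conv_def ..
  finally show "conv (conv f g) h \<xi> = conv f (conv g h) \<xi>" .
qed

lemma sqn_uminus[simp]: "sqn (- \<xi>) = sqn \<xi>"
  unfolding sqn_def by simp

lemma cconj_conv:
  "cconj (conv f g) = conv (cconj f) (cconj g)"
proof
  fix \<xi>
  have "cconj (conv f g) \<xi> = (\<Sum>\<^sub>\<infinity>\<eta>. cnj (f \<eta>) * cnj (g (- \<xi> - \<eta>)))"
    unfolding cconj_def conv_def by (subst infsum_cnj[symmetric]) simp
  also have "\<dots> = (\<Sum>\<^sub>\<infinity>\<eta>. cnj (f (- \<eta>)) * cnj (g (- \<xi> - (- \<eta>))))"
    by (rule neg_infsum[symmetric, where g="\<lambda>\<eta>. cnj (f \<eta>) * cnj (g (- \<xi> - \<eta>))"])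
  also have "\<dots> = conv (cconj f) (cconj g) \<xi>"
    unfolding cconj_def conv_def by (simp add: algebra_simps)
  finally show "cconj (conv f g) \<xi> = conv (cconj f) (cconj g) \<xi>" .
qed

lemma cconj_cconj[simp]: "cconj (cconj f) = f"
  unfolding cconj_def by simp

lemma l1_cconj: "l1 f \<Longrightarrow> l1 (cconj f)"
  unfolding l1_def cconj_def using neg_summable[of "\<lambda>x. cmod (f x)"] by simp

lemma L1n_cconj: "L1n (cconj f) = L1n f"
  unfolding L1n_def cconj_def using neg_infsum[of "\<lambda>x. cmod (f x)"] by simp

lemma cconj_add: "cconj (\<lambda>x. f x + g x) = (\<lambda>x. cconj f x + cconj g x)"
  unfolding cconj_def by simp

lemma cconj_diff: "cconj (\<lambda>x. f x - g x) = (\<lambda>x. cconj f x - cconj g x)"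
  unfolding cconj_def by simp

lemma cconj_cmult: "cconj (\<lambda>x. c * f x) = (\<lambda>x. cnj c * cconj f x)"
  unfolding cconj_def by simp

lemma schr_cconj: "cconj (schr t f) = schr (-t) (cconj f)"
  unfolding cconj_def schr_def by (auto simp: cis_cnj)

lemma schr_norm[simp]: "cmod (schr t f \<xi>) = cmod (f \<xi>)"
  unfolding schr_def by (simp add: norm_mult)

lemma schr_schr: "schr t (schr t' f) = schr (t + t') f"
proof -
  have "cis (- t * sqn \<xi>) * cis (- t' * sqn \<xi>) = cis (- (t + t') * sqn \<xi>)" for \<xi>
    by (simp add: cis_mult algebra_simps)
  note e = this
  show ?thesis unfolding schr_def
  proof (rule ext)
    fix \<xi>
    show "cis (- t * sqn \<xi>) * (cis (- t' * sqn \<xi>) * f \<xi>) = cis (- (t + t') * sqn \<xi>) * f \<xi>"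
      using e[of \<xi>] by (metis mult.assoc)
  qed
qed

lemma schr_0[simp]: "schr 0 f = f"
  unfolding schr_def by simp

lemma l1_schr: "l1 (schr t f) \<longleftrightarrow> l1 f"
  unfolding l1_def by simp

lemma L1n_schr: "L1n (schr t f) = L1n f"
  unfolding L1n_def by simp

lemma in_H_schr: "in_H s (schr t f) \<longleftrightarrow> in_H s f"
  unfolding in_H_iff by simp

lemma hn_schr: "hn s (schr t f) = hn s f"
  unfolding hn_def hQ_def by simp

lemma in_H_cconj: "in_H s f \<Longrightarrow> in_H s (cconj f)"
  unfolding in_H_iff cconj_def wt_def
  using neg_summable[of "\<lambda>\<xi>. (1 + sqn \<xi>) powr s * (cmod (f \<xi>))\<^sup>2"] by simp

lemma hn_cconj: "hn s (cconj f) = hn s f"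
  unfolding hn_def hQ_def cconj_def wt_def
  using neg_infsum[of "\<lambda>\<xi>. (1 + sqn \<xi>) powr s * (cmod (f \<xi>))\<^sup>2"] by simp



lemma H_l1:
  assumes "s > real CARD('d::finite) / 2" "in_H s (f :: 'd fcoef)"
  shows "l1 f" "L1n f \<le> sqrt (Wc s TYPE('d)) * hn s f"
  using l1_bound[OF assms] unfolding l1_def L1n_def by auto

lemma CS_inf:
  fixes x y :: "'a \<Rightarrow> real"
  assumes x0: "\<And>i. x i \<ge> 0" and y0: "\<And>i. y i \<ge> 0"
    and xs: "(\<lambda>i. (x i)^2) summable_on A" and ys: "(\<lambda>i. (y i)^2) summable_on A"
  shows "(\<lambda>i. x i * y i) summable_on A"
    "infsum (\<lambda>i. x i * y i) A \<le> sqrt (infsum (\<lambda>i. (x i)^2) A) * sqrt (infsum (\<lambda>i. (y i)^2) A)"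
proof -
  have b: "sum (\<lambda>i. x i * y i) F \<le> sqrt (infsum (\<lambda>i. (x i)^2) A) * sqrt (infsum (\<lambda>i. (y i)^2) A)"
    if "finite F" "F \<subseteq> A" for F
  proof -
    have "sum (\<lambda>i. x i * y i) F = (\<Sum>i\<in>F. \<bar>x i\<bar> * \<bar>y i\<bar>)" using x0 y0 by simp
    also have "\<dots> \<le> L2_set x F * L2_set y F" by (rule L2_set_mult_ineq)
    also have "\<dots> \<le> sqrt (infsum (\<lambda>i. (x i)^2) A) * sqrt (infsum (\<lambda>i. (y i)^2) A)"
      unfolding L2_set_def
      by (intro mult_mono real_sqrt_le_mono finite_sum_le_infsum xs ys that) (auto intro: sum_nonneg infsum_nonneg)
    finally show ?thesis .
  qed
  show s: "(\<lambda>i. x i * y i) summable_on A"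
    by (rule nonneg_bdd_above_summable_on) (use x0 y0 b in \<open>auto intro!: bdd_aboveI2\<close>)
  show "infsum (\<lambda>i. x i * y i) A \<le> sqrt (infsum (\<lambda>i. (x i)^2) A) * sqrt (infsum (\<lambda>i. (y i)^2) A)"
    by (rule infsum_le_finite_sums[OF s b]) auto
qed

lemma infsum_sum_fin:
  fixes g :: "'i \<Rightarrow> 'a \<Rightarrow> 'b::{topological_comm_monoid_add, t2_space}"
  assumes "finite F" "\<And>k. k \<in> F \<Longrightarrow> g k summable_on A"
  shows "(\<lambda>x. \<Sum>k\<in>F. g k x) summable_on A \<and> infsum (\<lambda>x. \<Sum>k\<in>F. g k x) A = (\<Sum>k\<in>F. infsum (g k) A)"
  using assms
proof (induction F rule: finite_induct)
  case empty
  then show ?case by simp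
next
  case (insert k F)
  then have IH: "(\<lambda>x. \<Sum>k\<in>F. g k x) summable_on A" "infsum (\<lambda>x. \<Sum>k\<in>F. g k x) A = (\<Sum>k\<in>F. infsum (g k) A)"
    by auto
  have gk: "g k summable_on A" using insert by auto
  show ?case using insert.hyps IH gk
    by (simp add: summable_on_add infsum_add)
qed

lemma real_bnd:
  fixes b :: "'a \<Rightarrow> real"
  assumes "\<And>x. b x \<ge> 0" "b summable_on UNIV"
  shows "b x \<le> infsum b UNIV"
  using finite_sum_le_infsum[of b UNIV "{x}"] assms by auto

lemma shift_fin_le_real:
  fixes b :: "int^'d \<Rightarrow> real"
  assumes b0: "\<And>x. b x \<ge> 0" and bs: "b summable_on UNIV" and F: "finite F"
  shows "(\<Sum>\<xi>\<in>F. b (\<xi> - \<eta>)) \<le> infsum b UNIV"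
proof -
  have inj: "inj_on (\<lambda>\<xi>. \<xi> - \<eta>) F" by (auto simp: inj_on_def)
  have "(\<Sum>\<xi>\<in>F. b (\<xi> - \<eta>)) = (\<Sum>\<zeta>\<in>(\<lambda>\<xi>. \<xi> - \<eta>) ` F. b \<zeta>)"
    by (simp add: sum.reindex[OF inj])
  also have "\<dots> \<le> infsum b UNIV"
    by (rule finite_sum_le_infsum) (use assms in auto)
  finally show ?thesis .
qed

lemma young:
  fixes a b :: "int^'d \<Rightarrow> real"
  assumes a0: "\<And>x. a x \<ge> 0" and b0: "\<And>x. b x \<ge> 0"
    and as: "(\<lambda>x. (a x)^2) summable_on UNIV" and bs: "b summable_on UNIV"
  shows "\<And>\<xi>. (\<lambda>\<eta>. a \<eta> * b (\<xi> - \<eta>)) summable_on UNIV"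
    "L2_set (\<lambda>\<xi>. \<Sum>\<^sub>\<infinity>\<eta>. a \<eta> * b (\<xi> - \<eta>)) F
       \<le> sqrt (infsum (\<lambda>x. (a x)^2) UNIV) * infsum b UNIV"
proof -
  define Sa where "Sa = infsum (\<lambda>x. (a x)^2) UNIV"
  define Sb where "Sb = infsum b UNIV"
  have Sb0: "Sb \<ge> 0" unfolding Sb_def using b0 by (intro infsum_nonneg) auto
  have Sa0: "Sa \<ge> 0" unfolding Sa_def by (intro infsum_nonneg) auto
  have bb: "b x \<le> Sb" for x unfolding Sb_def by (rule real_bnd[OF b0 bs])
  have brs: "(\<lambda>\<eta>. b (\<xi> - \<eta>)) summable_on UNIV" for \<xi>
    using bs by (subst reflect_summable)
  have brsum: "infsum (\<lambda>\<eta>. b (\<xi> - \<eta>)) UNIV = Sb" for \<xi>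
    unfolding Sb_def by (rule reflect_infsum)
  have a2b: "(\<lambda>\<eta>. (a \<eta>)^2 * b (\<xi> - \<eta>)) summable_on UNIV" for \<xi>
    by (rule summable_on_comparison_test[OF summable_on_cmult_left[OF as, of Sb]])
       (auto intro!: mult_left_mono bb simp: b0)
  have cs: "(\<lambda>\<eta>. (a \<eta> * sqrt (b (\<xi> - \<eta>))) * sqrt (b (\<xi> - \<eta>))) summable_on UNIV \<and>
      infsum (\<lambda>\<eta>. (a \<eta> * sqrt (b (\<xi> - \<eta>))) * sqrt (b (\<xi> - \<eta>))) UNIV
      \<le> sqrt (infsum (\<lambda>\<eta>. (a \<eta> * sqrt (b (\<xi> - \<eta>)))^2) UNIV) * sqrt (infsum (\<lambda>\<eta>. (sqrt (b (\<xi> - \<eta>)))^2) UNIV)" for \<xi>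
  proof -
    have e1: "(\<lambda>\<eta>. (a \<eta> * sqrt (b (\<xi> - \<eta>)))^2) = (\<lambda>\<eta>. (a \<eta>)^2 * b (\<xi> - \<eta>))"
      using b0 by (simp add: power_mult_distrib)
    have e2: "(\<lambda>\<eta>. (sqrt (b (\<xi> - \<eta>)))^2) = (\<lambda>\<eta>. b (\<xi> - \<eta>))"
      using b0 by simp
    show ?thesis
      using CS_inf[of "\<lambda>\<eta>. a \<eta> * sqrt (b (\<xi> - \<eta>))" "\<lambda>\<eta>. sqrt (b (\<xi> - \<eta>))" UNIV]
      unfolding e1 e2 using a0 b0 a2b brs by auto
  qed
  have e3: "(a \<eta> * sqrt (b (\<xi> - \<eta>))) * sqrt (b (\<xi> - \<eta>)) = a \<eta> * b (\<xi> - \<eta>)" for \<xi> \<eta>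
    using b0[of "\<xi> - \<eta>"] by (simp add: mult.assoc)
  have e1: "(\<lambda>\<eta>. (a \<eta> * sqrt (b (\<xi> - \<eta>)))^2) = (\<lambda>\<eta>. (a \<eta>)^2 * b (\<xi> - \<eta>))" for \<xi>
    using b0 by (simp add: power_mult_distrib)
  have e2: "(\<lambda>\<eta>. (sqrt (b (\<xi> - \<eta>)))^2) = (\<lambda>\<eta>. b (\<xi> - \<eta>))" for \<xi>
    using b0 by simp
  show sm: "(\<lambda>\<eta>. a \<eta> * b (\<xi> - \<eta>)) summable_on UNIV" for \<xi>
    using cs[of \<xi>] unfolding e3 by simp
  define c where "c = (\<lambda>\<xi>. \<Sum>\<^sub>\<infinity>\<eta>. a \<eta> * b (\<xi> - \<eta>))"
  have c0: "c \<xi> \<ge> 0" for \<xi> unfolding c_def using a0 b0 by (intro infsum_nonneg) auto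
  have c2: "(c \<xi>)^2 \<le> (\<Sum>\<^sub>\<infinity>\<eta>. (a \<eta>)^2 * b (\<xi> - \<eta>)) * Sb" for \<xi>
  proof -
    have "c \<xi> \<le> sqrt (\<Sum>\<^sub>\<infinity>\<eta>. (a \<eta>)^2 * b (\<xi> - \<eta>)) * sqrt Sb"
      using cs[of \<xi>] unfolding e3 e1 e2 brsum c_def by simp
    then have "(c \<xi>)^2 \<le> (sqrt (\<Sum>\<^sub>\<infinity>\<eta>. (a \<eta>)^2 * b (\<xi> - \<eta>)) * sqrt Sb)^2"
      using c0 by (intro power_mono) auto
    also have "\<dots> = (\<Sum>\<^sub>\<infinity>\<eta>. (a \<eta>)^2 * b (\<xi> - \<eta>)) * Sb"
      using Sb0 a0 b0 by (simp add: power_mult_distrib infsum_nonneg)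
    finally show ?thesis .
  qed
  show "L2_set (\<lambda>\<xi>. \<Sum>\<^sub>\<infinity>\<eta>. a \<eta> * b (\<xi> - \<eta>)) F \<le> sqrt Sa * Sb"
  proof (cases "finite F")
    case fin: True
    have "(\<Sum>\<xi>\<in>F. (c \<xi>)^2) \<le> (\<Sum>\<xi>\<in>F. (\<Sum>\<^sub>\<infinity>\<eta>. (a \<eta>)^2 * b (\<xi> - \<eta>)) * Sb)"
      by (rule sum_mono) (rule c2)
    also have "\<dots> = Sb * (\<Sum>\<xi>\<in>F. \<Sum>\<^sub>\<infinity>\<eta>. (a \<eta>)^2 * b (\<xi> - \<eta>))"
      by (simp add: sum_distrib_left mult.commute)
    also have "(\<Sum>\<xi>\<in>F. \<Sum>\<^sub>\<infinity>\<eta>. (a \<eta>)^2 * b (\<xi> - \<eta>)) = (\<Sum>\<^sub>\<infinity>\<eta>. \<Sum>\<xi>\<in>F. (a \<eta>)^2 * b (\<xi> - \<eta>))"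
      using infsum_sum_fin[OF fin, of "\<lambda>\<xi> \<eta>. (a \<eta>)^2 * b (\<xi> - \<eta>)" UNIV] a2b by simp
    also have "\<dots> \<le> (\<Sum>\<^sub>\<infinity>\<eta>. (a \<eta>)^2 * Sb)"
    proof (rule infsum_mono)
      show "(\<lambda>\<eta>. \<Sum>\<xi>\<in>F. (a \<eta>)^2 * b (\<xi> - \<eta>)) summable_on UNIV"
        using infsum_sum_fin[OF fin, of "\<lambda>\<xi> \<eta>. (a \<eta>)^2 * b (\<xi> - \<eta>)" UNIV] a2b by simp
      show "(\<lambda>\<eta>. (a \<eta>)^2 * Sb) summable_on UNIV" by (rule summable_on_cmult_left[OF as])
      fix \<eta>
      have "(\<Sum>\<xi>\<in>F. (a \<eta>)^2 * b (\<xi> - \<eta>)) = (a \<eta>)^2 * (\<Sum>\<xi>\<in>F. b (\<xi> - \<eta>))"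
        by (simp add: sum_distrib_left)
      also have "\<dots> \<le> (a \<eta>)^2 * Sb"
        unfolding Sb_def by (intro mult_left_mono shift_fin_le_real b0 bs fin) auto
      finally show "(\<Sum>\<xi>\<in>F. (a \<eta>)^2 * b (\<xi> - \<eta>)) \<le> (a \<eta>)^2 * Sb" .
    qed
    also have "\<dots> = Sa * Sb" unfolding Sa_def by (rule infsum_cmult_left) (use as in auto)
    finally have "(\<Sum>\<xi>\<in>F. (c \<xi>)^2) \<le> Sb * (Sa * Sb)" using Sb0 by (simp add: mult_left_mono)
    then have "sqrt (\<Sum>\<xi>\<in>F. (c \<xi>)^2) \<le> sqrt ((sqrt Sa * Sb)^2)"
      using Sa0 Sb0 by (intro real_sqrt_le_mono) (simp add: power_mult_distrib power2_eq_square algebra_simps)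
    then show ?thesis unfolding L2_set_def c_def Sa_def[symmetric] Sb_def[symmetric]
      using Sa0 Sb0 by simp
  qed (simp add: Sa0 Sb0)
qed

definition rho :: "int^'d \<Rightarrow> real" where "rho \<xi> = sqrt (1 + sqn \<xi>)"

lemma rho_tri:
  fixes \<xi> \<eta> :: "int^'d"
  shows "rho \<xi> \<le> rho \<eta> + rho (\<xi> - \<eta>)"
proof -
  define L where "L = (\<lambda>\<xi>::int^'d. L2_set (\<lambda>i. real_of_int (\<xi> $ i)) UNIV)"
  have sqL: "sqn \<zeta> = (L \<zeta>)^2" for \<zeta> :: "int^'d" unfolding L_def L2_set_def sqn_def by (simp add: sum_nonneg)
  have L0: "L \<zeta> \<ge> 0" for \<zeta> unfolding L_def by simp
  have tri: "L \<xi> \<le> L \<eta> + L (\<xi> - \<eta>)"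
  proof -
    have "L \<xi> = L2_set (\<lambda>i. real_of_int (\<eta> $ i) + real_of_int ((\<xi> - \<eta>) $ i)) UNIV"
      unfolding L_def by simp
    also have "\<dots> \<le> L \<eta> + L (\<xi> - \<eta>)" unfolding L_def by (rule L2_set_triangle_ineq)
    finally show ?thesis .
  qed
  define b c where "b = L \<eta>" and "c = L (\<xi> - \<eta>)"
  have b0: "b \<ge> 0" and c0: "c \<ge> 0" unfolding b_def c_def by (auto simp: L0)
  have "rho \<xi> = sqrt (1 + (L \<xi>)^2)" unfolding rho_def sqL ..
  also have "\<dots> \<le> sqrt (1 + (b + c)^2)"
    using tri L0[of \<xi>] unfolding b_def c_def by (intro real_sqrt_le_mono add_left_mono power_mono) auto
  also have "\<dots> \<le> sqrt (1 + b^2) + c"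
  proof -
    have bs: "b \<le> sqrt (1 + b^2)" by (simp add: real_le_rsqrt)
    have "1 + (b + c)^2 \<le> (sqrt (1 + b^2) + c)^2"
    proof -
      have "(sqrt (1 + b^2) + c)^2 = 1 + b^2 + 2 * c * sqrt (1 + b^2) + c^2"
        by (simp add: power2_eq_square algebra_simps)
      moreover have "2 * c * b \<le> 2 * c * sqrt (1 + b^2)" using bs c0 by (intro mult_left_mono) auto
      ultimately show ?thesis by (simp add: power2_eq_square algebra_simps)
    qed
    then show ?thesis using c0 by (simp add: real_sqrt_le_iff real_le_lsqrt add_nonneg_nonneg)
  qed
  also have "\<dots> \<le> sqrt (1 + b^2) + sqrt (1 + c^2)"
    by (simp add: real_le_rsqrt)
  also have "\<dots> = rho \<eta> + rho (\<xi> - \<eta>)" unfolding rho_def sqL b_def c_def ..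
  finally show ?thesis .
qed

lemma sqrt_wt: "sqrt (wt s \<xi>) = rho \<xi> powr s"
proof -
  have p: "1 + sqn \<xi> > 0" using sqn_nonneg[of \<xi>] by linarith
  have "sqrt (wt s \<xi>) = ((1 + sqn \<xi>) powr s) powr (1/2)" unfolding wt_def
    by (simp add: powr_half_sqrt)
  also have "\<dots> = ((1 + sqn \<xi>) powr (1/2)) powr s" by (simp add: powr_powr mult.commute)
  also have "\<dots> = rho \<xi> powr s" unfolding rho_def using p by (simp add: powr_half_sqrt)
  finally show ?thesis .
qed

lemma rho_pos: "rho \<xi> > 0"
  unfolding rho_def using sqn_nonneg[of \<xi>] by (simp add: add_pos_nonneg)

lemma wt_split:
  assumes s: "s \<ge> 0"
  shows "sqrt (wt s \<xi>) \<le> 2 powr s * (sqrt (wt s \<eta>) + sqrt (wt s (\<xi> - \<eta>)))"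
proof -
  define x y where "x = rho \<eta>" and "y = rho (\<xi> - \<eta>)"
  have x0: "x > 0" and y0: "y > 0" unfolding x_def y_def by (auto simp: rho_pos)
  have "sqrt (wt s \<xi>) = rho \<xi> powr s" by (rule sqrt_wt)
  also have "\<dots> \<le> (x + y) powr s"
    using rho_tri[of \<xi> \<eta>] rho_pos[of \<xi>] s unfolding x_def y_def by (intro powr_mono2) auto
  also have "\<dots> \<le> (2 * max x y) powr s"
    using x0 y0 s by (intro powr_mono2) auto
  also have "\<dots> = 2 powr s * (max x y) powr s"
    using x0 y0 by (simp add: powr_mult)
  also have "\<dots> \<le> 2 powr s * (x powr s + y powr s)"
    by (intro mult_left_mono) (auto simp: max_def)
  also have "\<dots> = 2 powr s * (sqrt (wt s \<eta>) + sqrt (wt s (\<xi> - \<eta>)))"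
    unfolding x_def y_def sqrt_wt ..
  finally show ?thesis .
qed

definition Ka :: "real \<Rightarrow> ('d::finite) itself \<Rightarrow> real" where
  "Ka s (_::'d itself) = 2 powr s * 2 * sqrt (Wc s TYPE('d))"

lemma Ka_nonneg: "Ka s TYPE('d::finite) \<ge> 0"
  unfolding Ka_def by (simp add: Wc_nonneg)

lemma conv_H:
  fixes f g :: "('d::finite) fcoef"
  assumes s: "s > real CARD('d) / 2" and f: "in_H s f" and g: "in_H s g"
  shows "in_H s (conv f g)" "hn s (conv f g) \<le> Ka s TYPE('d) * hn s f * hn s g"
proof -
  have s0: "s \<ge> 0" using s by (smt (verit) of_nat_0_le_iff divide_nonneg_nonneg)
  define W where "W = sqrt (Wc s TYPE('d))"
  have W0: "W \<ge> 0" unfolding W_def using Wc_nonneg by simp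
  define F where "F = (\<lambda>\<xi>. cmod (f \<xi>))"
  define G where "G = (\<lambda>\<xi>. cmod (g \<xi>))"
  define Af where "Af = (\<lambda>\<xi>. sqrt (wt s \<xi>) * F \<xi>)"
  define Ag where "Ag = (\<lambda>\<xi>. sqrt (wt s \<xi>) * G \<xi>)"
  have lf: "l1 f" and lg: "l1 g" using H_l1 s f g by auto
  have Fs: "F summable_on UNIV" and Gs: "G summable_on UNIV"
    using lf lg unfolding l1_def F_def G_def by auto
  have Fi: "infsum F UNIV \<le> W * hn s f" and Gi: "infsum G UNIV \<le> W * hn s g"
    using H_l1 s f g unfolding L1n_def F_def G_def W_def by auto
  have Af2: "(\<lambda>\<xi>. (Af \<xi>)^2) = (\<lambda>\<xi>. wt s \<xi> * (cmod (f \<xi>))^2)"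
    unfolding Af_def F_def by (simp add: power_mult_distrib)
  have Ag2: "(\<lambda>\<xi>. (Ag \<xi>)^2) = (\<lambda>\<xi>. wt s \<xi> * (cmod (g \<xi>))^2)"
    unfolding Ag_def G_def by (simp add: power_mult_distrib)
  have Afs: "(\<lambda>\<xi>. (Af \<xi>)^2) summable_on UNIV" using f unfolding Af2 in_H_iff .
  have Ags: "(\<lambda>\<xi>. (Ag \<xi>)^2) summable_on UNIV" using g unfolding Ag2 in_H_iff .
  have Afi: "sqrt (infsum (\<lambda>\<xi>. (Af \<xi>)^2) UNIV) = hn s f" unfolding Af2 hn_def hQ_def ..
  have Agi: "sqrt (infsum (\<lambda>\<xi>. (Ag \<xi>)^2) UNIV) = hn s g" unfolding Ag2 hn_def hQ_def ..
  have F0: "F x \<ge> 0" "G x \<ge> 0" "Af x \<ge> 0" "Ag x \<ge> 0" for x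
    unfolding F_def G_def Af_def Ag_def by auto
  define c1 where "c1 = (\<lambda>\<xi>. \<Sum>\<^sub>\<infinity>\<eta>. Af \<eta> * G (\<xi> - \<eta>))"
  define c2 where "c2 = (\<lambda>\<xi>. \<Sum>\<^sub>\<infinity>\<eta>. Ag \<eta> * F (\<xi> - \<eta>))"
  note Y1 = young[of Af G, OF F0(3) F0(2) Afs Gs]
  note Y2 = young[of Ag F, OF F0(4) F0(1) Ags Fs]
  have pw: "sqrt (wt s \<xi>) * cmod (conv f g \<xi>) \<le> 2 powr s * c1 \<xi> + 2 powr s * c2 \<xi>" for \<xi>
  proof -
    have S1: "(\<lambda>\<eta>. Af \<eta> * G (\<xi> - \<eta>)) summable_on UNIV" by (rule Y1(1))
    have S2': "(\<lambda>\<eta>. Ag \<eta> * F (\<xi> - \<eta>)) summable_on UNIV" by (rule Y2(1))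
    have S2: "(\<lambda>\<eta>. F \<eta> * Ag (\<xi> - \<eta>)) summable_on UNIV"
      using S2' by (subst reflect_summable[symmetric, of _ \<xi>]) (simp add: mult.commute)
    have c2e: "c2 \<xi> = (\<Sum>\<^sub>\<infinity>\<eta>. F \<eta> * Ag (\<xi> - \<eta>))"
      unfolding c2_def by (subst reflect_infsum[symmetric, of _ \<xi>]) (simp add: mult.commute)
    have A0: "(\<lambda>\<eta>. F \<eta> * G (\<xi> - \<eta>)) summable_on UNIV"
      using conv_summable(2)[OF lf lg] unfolding F_def G_def .
    have "sqrt (wt s \<xi>) * cmod (conv f g \<xi>) \<le> sqrt (wt s \<xi>) * aconv f g \<xi>"
      by (intro mult_left_mono conv_le_aconv lf lg) auto
    also have "\<dots> = (\<Sum>\<^sub>\<infinity>\<eta>. sqrt (wt s \<xi>) * (F \<eta> * G (\<xi> - \<eta>)))"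
      unfolding aconv_def F_def G_def by (simp add: infsum_cmult_right')
    also have "\<dots> \<le> (\<Sum>\<^sub>\<infinity>\<eta>. 2 powr s * (Af \<eta> * G (\<xi> - \<eta>)) + 2 powr s * (F \<eta> * Ag (\<xi> - \<eta>)))"
    proof (rule infsum_mono)
      show "(\<lambda>\<eta>. sqrt (wt s \<xi>) * (F \<eta> * G (\<xi> - \<eta>))) summable_on UNIV"
        by (rule summable_on_cmult_right[OF A0])
      show "(\<lambda>\<eta>. 2 powr s * (Af \<eta> * G (\<xi> - \<eta>)) + 2 powr s * (F \<eta> * Ag (\<xi> - \<eta>))) summable_on UNIV"
        by (intro summable_on_add summable_on_cmult_right S1 S2)
      fix \<eta>
      have "sqrt (wt s \<xi>) * (F \<eta> * G (\<xi> - \<eta>)) \<le> (2 powr s * (sqrt (wt s \<eta>) + sqrt (wt s (\<xi> - \<eta>)))) * (F \<eta> * G (\<xi> - \<eta>))"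
        by (intro mult_right_mono wt_split s0) (auto simp: F0)
      also have "\<dots> = 2 powr s * (Af \<eta> * G (\<xi> - \<eta>)) + 2 powr s * (F \<eta> * Ag (\<xi> - \<eta>))"
        unfolding Af_def Ag_def by (simp add: algebra_simps)
      finally show "sqrt (wt s \<xi>) * (F \<eta> * G (\<xi> - \<eta>)) \<le> 2 powr s * (Af \<eta> * G (\<xi> - \<eta>)) + 2 powr s * (F \<eta> * Ag (\<xi> - \<eta>))" .
    qed
    also have "\<dots> = 2 powr s * c1 \<xi> + 2 powr s * c2 \<xi>"
      unfolding c1_def c2e
      by (simp add: infsum_add summable_on_cmult_right S1 S2 infsum_cmult_right')
    finally show ?thesis .
  qed
  have L: "L2_set (\<lambda>\<xi>. sqrt (wt s \<xi>) * cmod (conv f g \<xi>)) K \<le> Ka s TYPE('d) * hn s f * hn s g" for K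
  proof -
    have "L2_set (\<lambda>\<xi>. sqrt (wt s \<xi>) * cmod (conv f g \<xi>)) K \<le> L2_set (\<lambda>\<xi>. 2 powr s * c1 \<xi> + 2 powr s * c2 \<xi>) K"
      by (rule L2_set_mono) (auto intro: pw)
    also have "\<dots> \<le> L2_set (\<lambda>\<xi>. 2 powr s * c1 \<xi>) K + L2_set (\<lambda>\<xi>. 2 powr s * c2 \<xi>) K"
      by (rule L2_set_triangle_ineq)
    also have "\<dots> = 2 powr s * L2_set c1 K + 2 powr s * L2_set c2 K"
      by (simp add: L2_set_right_distrib)
    also have "\<dots> \<le> 2 powr s * (hn s f * (W * hn s g)) + 2 powr s * (hn s g * (W * hn s f))"
    proof (intro add_mono mult_left_mono)
      show "L2_set c1 K \<le> hn s f * (W * hn s g)"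
        using Y1(2)[of K] Gi unfolding c1_def Afi
        by (meson hn_nonneg mult_left_mono order_trans)
      show "L2_set c2 K \<le> hn s g * (W * hn s f)"
        using Y2(2)[of K] Fi unfolding c2_def Agi
        by (meson hn_nonneg mult_left_mono order_trans)
    qed auto
    also have "\<dots> = Ka s TYPE('d) * hn s f * hn s g"
      unfolding Ka_def W_def by (simp add: algebra_simps)
    finally show ?thesis .
  qed
  have "Ka s TYPE('d) * hn s f * hn s g \<ge> 0" by (simp add: Ka_nonneg)
  then show "in_H s (conv f g)" "hn s (conv f g) \<le> Ka s TYPE('d) * hn s f * hn s g"
    using H_finI[OF _ L] by auto
qed



definition T3 :: "('d::finite) fcoef \<Rightarrow> 'd fcoef \<Rightarrow> 'd fcoef \<Rightarrow> 'd fcoef" where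
  "T3 a b c = conv (conv a (cconj b)) c"

lemma cubic_T3: "cubic f = T3 f f f"
  unfolding cubic_def T3_def ..

lemma quintic_T3: "quintic f = T3 (cubic f) f f"
  unfolding quintic_def T3_def cubic_def ..

lemma hn_add:
  assumes "in_H s f" "in_H s g"
  shows "in_H s (\<lambda>\<xi>. f \<xi> + g \<xi>)" "hn s (\<lambda>\<xi>. f \<xi> + g \<xi>) \<le> hn s f + hn s g"
  using H_dom2[OF assms, of 1 1 "\<lambda>\<xi>. f \<xi> + g \<xi>"] by (auto intro: norm_triangle_ineq)

lemma hn_diff:
  assumes "in_H s f" "in_H s g"
  shows "in_H s (\<lambda>\<xi>. f \<xi> - g \<xi>)" "hn s (\<lambda>\<xi>. f \<xi> - g \<xi>) \<le> hn s f + hn s g"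
  using H_dom2[OF assms, of 1 1 "\<lambda>\<xi>. f \<xi> - g \<xi>"] by (auto intro: norm_triangle_ineq4)

lemma hn_scale:
  assumes "in_H s f"
  shows "in_H s (\<lambda>\<xi>. c * f \<xi>)" "hn s (\<lambda>\<xi>. c * f \<xi>) \<le> cmod c * hn s f"
  using H_dom1[OF assms, of "cmod c" "\<lambda>\<xi>. c * f \<xi>"] by (auto simp: norm_mult)

lemma hn_uminus:
  assumes "in_H s f"
  shows "in_H s (\<lambda>\<xi>. - f \<xi>)" "hn s (\<lambda>\<xi>. - f \<xi>) \<le> hn s f"
  using H_dom1[OF assms, of 1 "\<lambda>\<xi>. - f \<xi>"] by auto

context
  fixes s :: real and dummy :: "'d::finite itself"
  assumes s: "s > real CARD('d) / 2"
begin

lemma T3_H: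
  fixes a b c :: "'d fcoef"
  assumes "in_H s a" "in_H s b" "in_H s c"
  shows "in_H s (T3 a b c)" "hn s (T3 a b c) \<le> (Ka s TYPE('d))^2 * hn s a * hn s b * hn s c"
proof -
  have b': "in_H s (cconj b)" "hn s (cconj b) = hn s b" using assms in_H_cconj hn_cconj by auto
  note c1 = conv_H[OF s assms(1) b'(1)]
  note c2 = conv_H[OF s c1(1) assms(3)]
  show "in_H s (T3 a b c)" unfolding T3_def by (rule c2(1))
  have "hn s (T3 a b c) \<le> Ka s TYPE('d) * hn s (conv a (cconj b)) * hn s c"
    unfolding T3_def by (rule c2(2))
  also have "\<dots> \<le> Ka s TYPE('d) * (Ka s TYPE('d) * hn s a * hn s b) * hn s c"
    using c1(2) b'(2) by (intro mult_right_mono mult_left_mono) (auto simp: Ka_nonneg)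
  finally show "hn s (T3 a b c) \<le> (Ka s TYPE('d))^2 * hn s a * hn s b * hn s c"
    by (simp add: power2_eq_square algebra_simps)
qed

lemma l1H: "in_H s f \<Longrightarrow> l1 (f :: 'd fcoef)"
  using H_l1[OF s] by auto

lemma cc_H: "in_H s a \<Longrightarrow> in_H s b \<Longrightarrow> in_H s (conv a (cconj b :: 'd fcoef))"
  by (rule conv_H(1)[OF s], assumption, rule in_H_cconj)

lemma cv_H: "in_H s a \<Longrightarrow> in_H s b \<Longrightarrow> in_H s (conv a (b :: 'd fcoef))"
  by (rule conv_H(1)[OF s])

lemma T3_add1:
  fixes a a' b c :: "'d fcoef"
  assumes "in_H s a" "in_H s a'" "in_H s b" "in_H s c"
  shows "T3 (\<lambda>\<xi>. a \<xi> + a' \<xi>) b c = (\<lambda>\<xi>. T3 a b c \<xi> + T3 a' b c \<xi>)"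
proof -
  have l: "l1 a" "l1 a'" "l1 (cconj b)" "l1 c" using assms by (auto intro!: l1H in_H_cconj)
  have l2: "l1 (conv a (cconj b))" "l1 (conv a' (cconj b))"
    using assms by (auto intro!: l1H cc_H)
  show ?thesis unfolding T3_def
    by (simp add: conv_add_left[OF l(1,2,3)] conv_add_left[OF l2 l(4)])
qed

lemma T3_add2:
  fixes a b b' c :: "'d fcoef"
  assumes "in_H s a" "in_H s b" "in_H s b'" "in_H s c"
  shows "T3 a (\<lambda>\<xi>. b \<xi> + b' \<xi>) c = (\<lambda>\<xi>. T3 a b c \<xi> + T3 a b' c \<xi>)"
proof -
  have l: "l1 a" "l1 (cconj b)" "l1 (cconj b')" "l1 c" using assms by (auto intro!: l1H in_H_cconj)
  have l2: "l1 (conv a (cconj b))" "l1 (conv a (cconj b'))"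
    using assms by (auto intro!: l1H cc_H)
  show ?thesis unfolding T3_def cconj_add
    by (simp add: conv_add_right[OF l(2,3,1)] conv_add_left[OF l2 l(4)])
qed

lemma T3_add3:
  fixes a b c c' :: "'d fcoef"
  assumes "in_H s a" "in_H s b" "in_H s c" "in_H s c'"
  shows "T3 a b (\<lambda>\<xi>. c \<xi> + c' \<xi>) = (\<lambda>\<xi>. T3 a b c \<xi> + T3 a b c' \<xi>)"
proof -
  have l: "l1 c" "l1 c'" "l1 (conv a (cconj b))"
    using assms by (auto intro!: l1H cc_H)
  show ?thesis unfolding T3_def by (rule conv_add_right[OF l])
qed

lemma T3_diff1:
  fixes a a' b c :: "'d fcoef"
  assumes "in_H s a" "in_H s a'" "in_H s b" "in_H s c"
  shows "T3 (\<lambda>\<xi>. a \<xi> - a' \<xi>) b c = (\<lambda>\<xi>. T3 a b c \<xi> - T3 a' b c \<xi>)"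
proof -
  have l: "l1 a" "l1 a'" "l1 (cconj b)" "l1 c" using assms by (auto intro!: l1H in_H_cconj)
  have l2: "l1 (conv a (cconj b))" "l1 (conv a' (cconj b))"
    using assms by (auto intro!: l1H cc_H)
  show ?thesis unfolding T3_def
    by (simp add: conv_diff_left[OF l(1,2,3)] conv_diff_left[OF l2 l(4)])
qed

lemma T3_diff2:
  fixes a b b' c :: "'d fcoef"
  assumes "in_H s a" "in_H s b" "in_H s b'" "in_H s c"
  shows "T3 a (\<lambda>\<xi>. b \<xi> - b' \<xi>) c = (\<lambda>\<xi>. T3 a b c \<xi> - T3 a b' c \<xi>)"
proof -
  have l: "l1 a" "l1 (cconj b)" "l1 (cconj b')" "l1 c" using assms by (auto intro!: l1H in_H_cconj)
  have l2: "l1 (conv a (cconj b))" "l1 (conv a (cconj b'))"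
    using assms by (auto intro!: l1H cc_H)
  show ?thesis unfolding T3_def cconj_diff
    by (simp add: conv_diff_right[OF l(2,3,1)] conv_diff_left[OF l2 l(4)])
qed

lemma T3_diff3:
  fixes a b c c' :: "'d fcoef"
  assumes "in_H s a" "in_H s b" "in_H s c" "in_H s c'"
  shows "T3 a b (\<lambda>\<xi>. c \<xi> - c' \<xi>) = (\<lambda>\<xi>. T3 a b c \<xi> - T3 a b c' \<xi>)"
proof -
  have l: "l1 c" "l1 c'" "l1 (conv a (cconj b))"
    using assms by (auto intro!: l1H cc_H)
  show ?thesis unfolding T3_def by (rule conv_diff_right[OF l])
qed

lemma T3_scale1: "T3 (\<lambda>\<xi>. c * a \<xi>) b d = (\<lambda>\<xi>. c * T3 a b d \<xi>)"
  unfolding T3_def by (simp add: conv_cmult_left)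

lemma T3_scale2: "T3 a (\<lambda>\<xi>. c * b \<xi>) d = (\<lambda>\<xi>. cnj c * T3 a b d \<xi>)"
  unfolding T3_def cconj_cmult by (simp add: conv_cmult_left conv_cmult_right)

lemma T3_scale3: "T3 a b (\<lambda>\<xi>. c * d \<xi>) = (\<lambda>\<xi>. c * T3 a b d \<xi>)"
  unfolding T3_def by (simp add: conv_cmult_right)

lemma quintic_id:
  fixes A :: "'d fcoef"
  assumes A: "in_H s A"
  shows "T3 (cubic A) A A = quintic A" "T3 A (cubic A) A = quintic A" "T3 A A (cubic A) = quintic A"
proof -
  have Ab: "in_H s (cconj A)" using A in_H_cconj by auto
  define P where "P = conv A (cconj A)"
  have PH: "in_H s P" unfolding P_def using conv_H[OF s A Ab] by auto
  have NA: "cubic A = conv P A" unfolding cubic_def P_def ..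
  have NAH: "in_H s (cubic A)" unfolding NA using conv_H[OF s PH A] by auto
  have lA: "l1 A" "l1 (cconj A)" "l1 P" using A Ab PH l1H by auto
  have cP: "cconj P = P" unfolding P_def cconj_conv by (simp add: conv_comm)
  have cNA: "cconj (cubic A) = conv P (cconj A)" unfolding NA cconj_conv cP ..
  show q1: "T3 (cubic A) A A = quintic A" unfolding quintic_T3 ..
  have "T3 A (cubic A) A = conv (conv A (conv P (cconj A))) A" unfolding T3_def cNA ..
  also have "conv A (conv P (cconj A)) = conv (conv A P) (cconj A)"
    by (rule conv_assoc[symmetric]) (use lA in auto)
  also have "conv A P = conv P A" by (rule conv_comm)
  also have "conv (conv (conv P A) (cconj A)) A = quintic A" unfolding quintic_def P_def ..
  finally show "T3 A (cubic A) A = quintic A" .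
  have "T3 A A (cubic A) = conv P (conv P A)" unfolding T3_def NA P_def ..
  also have "\<dots> = conv (conv P P) A"
    by (rule conv_assoc[symmetric]) (use lA in auto)
  also have "conv P P = conv (conv P A) (cconj A)"
    unfolding P_def by (rule conv_assoc[symmetric]) (use lA in \<open>auto simp: P_def\<close>)
  also have "conv (conv (conv P A) (cconj A)) A = quintic A" unfolding quintic_def P_def ..
  finally show "T3 A A (cubic A) = quintic A" .
qed

end



lemma cis_minus_one: "cmod (cis x - 1) \<le> \<bar>x\<bar>"
proof -
  have "(cmod (cis x - 1))^2 = (cos x - 1)^2 + (sin x)^2" by (simp add: cmod_power2)
  also have "\<dots> = 2 - 2 * cos x" by (simp add: power2_eq_square algebra_simps sin_squared_eq)
  also have "cos x = 1 - 2 * (sin (x/2))^2" using cos_double_sin[of "x/2"] by simp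
  also have "2 - 2 * (1 - 2 * (sin (x/2))^2) = 4 * (sin (x/2))^2" by simp
  also have "\<dots> \<le> 4 * (x/2)^2"
  proof -
    have "\<bar>sin (x/2)\<bar> \<le> \<bar>x/2\<bar>" by (rule abs_sin_x_le_abs_x)
    then have "(sin (x/2))^2 \<le> (x/2)^2" by (metis abs_ge_zero power2_abs power_mono)
    then show ?thesis by simp
  qed
  also have "\<dots> = x^2" by (simp add: power2_eq_square)
  finally have "(cmod (cis x - 1))^2 \<le> x^2" .
  then show ?thesis using abs_le_square_iff[of "cmod (cis x - 1)" x] by simp
qed

lemma Re_wcz: "Re (complex_of_real w * cnj z * z) = w * (cmod z)^2"
  by (simp only: cmod_power2) (simp add: algebra_simps power2_eq_square)

lemma schr_minus_H:
  assumes f: "in_H (r + 2) f"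
  shows "in_H r (\<lambda>\<xi>. schr t f \<xi> - f \<xi>)" "hn r (\<lambda>\<xi>. schr t f \<xi> - f \<xi>) \<le> \<bar>t\<bar> * hn (r + 2) f"
proof -
  have pw: "sqrt (wt r \<xi>) * cmod (schr t f \<xi> - f \<xi>) \<le> \<bar>t\<bar> * (sqrt (wt (r + 2) \<xi>) * cmod (f \<xi>))" for \<xi>
  proof -
    have p: "1 + sqn \<xi> > 0" using sqn_nonneg[of \<xi>] by linarith
    have "cmod (schr t f \<xi> - f \<xi>) = cmod (cis (- t * sqn \<xi>) - 1) * cmod (f \<xi>)"
      unfolding schr_def by (simp add: norm_mult[symmetric] algebra_simps)
    also have "\<dots> \<le> \<bar>t\<bar> * (1 + sqn \<xi>) * cmod (f \<xi>)"
    proof (intro mult_right_mono)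
      have "cmod (cis (- t * sqn \<xi>) - 1) \<le> \<bar>- t * sqn \<xi>\<bar>" by (rule cis_minus_one)
      also have "\<dots> \<le> \<bar>t\<bar> * (1 + sqn \<xi>)" by (simp add: abs_mult mult_left_mono)
      finally show "cmod (cis (- t * sqn \<xi>) - 1) \<le> \<bar>t\<bar> * (1 + sqn \<xi>)" .
    qed auto
    finally have 1: "cmod (schr t f \<xi> - f \<xi>) \<le> \<bar>t\<bar> * (1 + sqn \<xi>) * cmod (f \<xi>)" .
    have 2: "sqrt (wt r \<xi>) * (1 + sqn \<xi>) = sqrt (wt (r + 2) \<xi>)"
    proof -
      have "wt (r + 2) \<xi> = wt r \<xi> * (1 + sqn \<xi>)^2"
        unfolding wt_def using p by (simp add: powr_add powr_numeral)
      then show ?thesis using p by (simp add: real_sqrt_mult)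
    qed
    have "sqrt (wt r \<xi>) * cmod (schr t f \<xi> - f \<xi>) \<le> sqrt (wt r \<xi>) * (\<bar>t\<bar> * (1 + sqn \<xi>) * cmod (f \<xi>))"
      by (intro mult_left_mono 1) auto
    also have "\<dots> = \<bar>t\<bar> * ((sqrt (wt r \<xi>) * (1 + sqn \<xi>)) * cmod (f \<xi>))" by (simp add: algebra_simps)
    finally show ?thesis unfolding 2 .
  qed
  have L: "L2_set (\<lambda>\<xi>. sqrt (wt r \<xi>) * cmod (schr t f \<xi> - f \<xi>)) F \<le> \<bar>t\<bar> * hn (r + 2) f" for F
  proof -
    have "L2_set (\<lambda>\<xi>. sqrt (wt r \<xi>) * cmod (schr t f \<xi> - f \<xi>)) F
        \<le> L2_set (\<lambda>\<xi>. \<bar>t\<bar> * (sqrt (wt (r + 2) \<xi>) * cmod (f \<xi>))) F"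
      by (rule L2_set_mono) (auto intro: pw)
    also have "\<dots> = \<bar>t\<bar> * L2_set (\<lambda>\<xi>. sqrt (wt (r + 2) \<xi>) * cmod (f \<xi>)) F"
      by (simp add: L2_set_right_distrib)
    also have "\<dots> \<le> \<bar>t\<bar> * hn (r + 2) f" by (intro mult_left_mono H_fin_le f) auto
    finally show ?thesis .
  qed
  show "in_H r (\<lambda>\<xi>. schr t f \<xi> - f \<xi>)" "hn r (\<lambda>\<xi>. schr t f \<xi> - f \<xi>) \<le> \<bar>t\<bar> * hn (r + 2) f"
    using H_finI[OF _ L] by auto
qed

lemma H_mvt:
  fixes \<phi> \<phi>' :: "real \<Rightarrow> ('d::finite) fcoef"
  assumes h: "h \<ge> 0" and c: "c \<ge> 0"
    and der: "\<And>\<sigma> \<xi>. \<sigma> \<in> {0..h} \<Longrightarrow> ((\<lambda>\<sigma>. \<phi> \<sigma> \<xi>) has_vector_derivative \<phi>' \<sigma> \<xi>) (at \<sigma> within {0..h})"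
    and z: "\<And>\<xi>. \<phi> 0 \<xi> = 0"
    and bH: "\<And>\<sigma>. \<sigma> \<in> {0..h} \<Longrightarrow> in_H r (\<phi>' \<sigma>)"
    and bn: "\<And>\<sigma>. \<sigma> \<in> {0..h} \<Longrightarrow> hn r (\<phi>' \<sigma>) \<le> c * \<sigma>^k"
  shows "in_H r (\<phi> h)" "hn r (\<phi> h) \<le> c * h^(Suc k) / real (Suc k)"
proof -
  define B where "B = c * h^(Suc k) / real (Suc k)"
  have B0: "B \<ge> 0" unfolding B_def using h c by simp
  have L: "L2_set (\<lambda>\<xi>. sqrt (wt r \<xi>) * cmod (\<phi> h \<xi>)) F \<le> B" if fin: "finite F" for F
  proof -
    define S where "S = L2_set (\<lambda>\<xi>. sqrt (wt r \<xi>) * cmod (\<phi> h \<xi>)) F"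
    have S0: "S \<ge> 0" unfolding S_def by simp
    define \<Psi> where "\<Psi> = (\<lambda>\<sigma>. \<Sum>\<xi>\<in>F. complex_of_real (wt r \<xi>) * cnj (\<phi> h \<xi>) * \<phi> \<sigma> \<xi>)"
    define \<Psi>' where "\<Psi>' = (\<lambda>\<sigma>. \<Sum>\<xi>\<in>F. complex_of_real (wt r \<xi>) * cnj (\<phi> h \<xi>) * \<phi>' \<sigma> \<xi>)"
    have dP: "(\<Psi> has_vector_derivative \<Psi>' \<sigma>) (at \<sigma> within {0..h})" if "\<sigma> \<in> {0..h}" for \<sigma>
      unfolding \<Psi>_def \<Psi>'_def
      by (intro has_vector_derivative_sum has_vector_derivative_mult_right der that)
    have I1: "(\<Psi>' has_integral (\<Psi> h - \<Psi> 0)) {0..h}"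
      by (rule fundamental_theorem_of_calculus[OF h dP])
    have I2: "((Re \<circ> \<Psi>') has_integral Re (\<Psi> h - \<Psi> 0)) {0..h}"
      by (rule has_integral_linear[OF I1 bounded_linear_Re])
    have P0: "\<Psi> 0 = 0" unfolding \<Psi>_def by (simp add: z)
    have Ph: "Re (\<Psi> h) = S^2"
    proof -
      have "Re (\<Psi> h) = (\<Sum>\<xi>\<in>F. wt r \<xi> * (cmod (\<phi> h \<xi>))^2)"
        unfolding \<Psi>_def
        by (simp only: Re_sum Re_wcz)
      also have "\<dots> = S^2" unfolding S_def by (rule sum_L2)
      finally show ?thesis .
    qed
    have dpoly: "((\<lambda>\<sigma>. S * c * (\<sigma>^(Suc k) / real (Suc k))) has_vector_derivative S * c * \<sigma>^k) (at \<sigma> within {0..h})" for \<sigma>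
    proof -
      have "((\<lambda>\<sigma>. S * c * (\<sigma>^(Suc k) / real (Suc k))) has_real_derivative S * c * (real (Suc k) * \<sigma>^k / real (Suc k))) (at \<sigma> within {0..h})"
        by (intro derivative_eq_intros) auto
      then show ?thesis by (simp add: has_real_derivative_iff_has_vector_derivative)
    qed
    have I3: "((\<lambda>\<sigma>. S * c * \<sigma>^k) has_integral (S * c * (h^(Suc k) / real (Suc k)) - S * c * (0^(Suc k) / real (Suc k)))) {0..h}"
      by (rule fundamental_theorem_of_calculus[OF h]) (rule dpoly)
    have le: "(Re \<circ> \<Psi>') \<sigma> \<le> S * c * \<sigma>^k" if "\<sigma> \<in> {0..h}" for \<sigma>
    proof -
      have "(Re \<circ> \<Psi>') \<sigma> = (\<Sum>\<xi>\<in>F. Re (complex_of_real (wt r \<xi>) * cnj (\<phi> h \<xi>) * \<phi>' \<sigma> \<xi>))"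
        unfolding \<Psi>'_def by (simp add: Re_sum)
      also have "\<dots> \<le> (\<Sum>\<xi>\<in>F. \<bar>sqrt (wt r \<xi>) * cmod (\<phi> h \<xi>)\<bar> * \<bar>sqrt (wt r \<xi>) * cmod (\<phi>' \<sigma> \<xi>)\<bar>)"
      proof (rule sum_mono)
        fix \<xi>
        have "Re (complex_of_real (wt r \<xi>) * cnj (\<phi> h \<xi>) * \<phi>' \<sigma> \<xi>) \<le> cmod (complex_of_real (wt r \<xi>) * cnj (\<phi> h \<xi>) * \<phi>' \<sigma> \<xi>)"
          by (rule complex_Re_le_cmod)
        also have "\<dots> = \<bar>sqrt (wt r \<xi>) * cmod (\<phi> h \<xi>)\<bar> * \<bar>sqrt (wt r \<xi>) * cmod (\<phi>' \<sigma> \<xi>)\<bar>"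
          by (simp add: norm_mult abs_mult)
        finally show "Re (complex_of_real (wt r \<xi>) * cnj (\<phi> h \<xi>) * \<phi>' \<sigma> \<xi>) \<le> \<bar>sqrt (wt r \<xi>) * cmod (\<phi> h \<xi>)\<bar> * \<bar>sqrt (wt r \<xi>) * cmod (\<phi>' \<sigma> \<xi>)\<bar>" .
      qed
      also have "\<dots> \<le> S * L2_set (\<lambda>\<xi>. sqrt (wt r \<xi>) * cmod (\<phi>' \<sigma> \<xi>)) F"
        unfolding S_def by (rule L2_set_mult_ineq)
      also have "\<dots> \<le> S * (c * \<sigma>^k)"
        by (intro mult_left_mono S0 order_trans[OF H_fin_le[OF bH[OF that]] bn[OF that]])
      finally show ?thesis by simp
    qed
    have "S^2 \<le> S * c * (h^(Suc k) / real (Suc k)) - S * c * (0^(Suc k) / real (Suc k))"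
      using has_integral_le[OF I2 I3 le] P0 Ph by simp
    then have "S * S \<le> S * B" unfolding B_def by (simp add: power2_eq_square algebra_simps)
    then have "S \<le> B" using S0 B0
      by (cases "S = 0") (auto simp: mult_le_cancel_left)
    then show ?thesis unfolding S_def .
  qed
  show "in_H r (\<phi> h)" "hn r (\<phi> h) \<le> c * h^(Suc k) / real (Suc k)"
    using H_finI[OF B0 L] unfolding B_def by auto
qed

context
  fixes s :: real and dummy :: "'d::finite itself"
  assumes s: "s > real CARD('d) / 2"
begin

lemma T3_3diff:
  fixes a b c a' b' c' :: "'d fcoef"
  assumes H: "in_H s a" "in_H s b" "in_H s c" "in_H s a'" "in_H s b'" "in_H s c'"
  shows "(\<lambda>\<xi>. T3 a b c \<xi> - T3 a' b' c' \<xi>) =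
    (\<lambda>\<xi>. T3 (\<lambda>x. a x - a' x) b c \<xi> + T3 a' (\<lambda>x. b x - b' x) c \<xi> + T3 a' b' (\<lambda>x. c x - c' x) \<xi>)"
  by (simp add: T3_diff1[OF s H(1,4,2,3)] T3_diff2[OF s H(4,2,5,3)] T3_diff3[OF s H(4,5,3,6)])

lemma T3_3diff_H:
  fixes a b c a' b' c' :: "'d fcoef"
  assumes H: "in_H s a" "in_H s b" "in_H s c" "in_H s a'" "in_H s b'" "in_H s c'"
  shows "in_H s (\<lambda>\<xi>. T3 a b c \<xi> - T3 a' b' c' \<xi>)"
    "hn s (\<lambda>\<xi>. T3 a b c \<xi> - T3 a' b' c' \<xi>) \<le> (Ka s TYPE('d))^2 *
       (hn s (\<lambda>x. a x - a' x) * hn s b * hn s c + hn s a' * hn s (\<lambda>x. b x - b' x) * hn s c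
        + hn s a' * hn s b' * hn s (\<lambda>x. c x - c' x))"
proof -
  note D = hn_diff(1)[OF H(1,4)] hn_diff(1)[OF H(2,5)] hn_diff(1)[OF H(3,6)]
  note t1 = T3_H[OF s D(1) H(2,3)] and t2 = T3_H[OF s H(4) D(2) H(3)] and t3 = T3_H[OF s H(4,5) D(3)]
  note a12 = hn_add[OF t1(1) t2(1)]
  note a123 = hn_add[OF a12(1) t3(1)]
  show "in_H s (\<lambda>\<xi>. T3 a b c \<xi> - T3 a' b' c' \<xi>)" unfolding T3_3diff[OF H] using a123(1) .
  have "hn s (\<lambda>\<xi>. T3 a b c \<xi> - T3 a' b' c' \<xi>) \<le> hn s (\<lambda>\<xi>. T3 (\<lambda>x. a x - a' x) b c \<xi> + T3 a' (\<lambda>x. b x - b' x) c \<xi>) + hn s (T3 a' b' (\<lambda>x. c x - c' x))"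
    unfolding T3_3diff[OF H] using a123(2) .
  also have "\<dots> \<le> (hn s (T3 (\<lambda>x. a x - a' x) b c) + hn s (T3 a' (\<lambda>x. b x - b' x) c)) + hn s (T3 a' b' (\<lambda>x. c x - c' x))"
    using a12(2) by simp
  also have "\<dots> \<le> (Ka s TYPE('d))^2 * hn s (\<lambda>x. a x - a' x) * hn s b * hn s c + (Ka s TYPE('d))^2 * hn s a' * hn s (\<lambda>x. b x - b' x) * hn s c
        + (Ka s TYPE('d))^2 * hn s a' * hn s b' * hn s (\<lambda>x. c x - c' x)"
    using t1(2) t2(2) t3(2) by linarith
  finally show "hn s (\<lambda>\<xi>. T3 a b c \<xi> - T3 a' b' c' \<xi>) \<le> (Ka s TYPE('d))^2 *
       (hn s (\<lambda>x. a x - a' x) * hn s b * hn s c + hn s a' * hn s (\<lambda>x. b x - b' x) * hn s c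
        + hn s a' * hn s b' * hn s (\<lambda>x. c x - c' x))" by (simp add: algebra_simps)
qed

lemma cubic_H:
  assumes "in_H s (f :: 'd fcoef)"
  shows "in_H s (cubic f)" "hn s (cubic f) \<le> (Ka s TYPE('d))^2 * (hn s f)^3"
  using T3_H[OF s assms assms assms] unfolding cubic_T3 by (auto simp: power3_eq_cube algebra_simps)

lemma cubic_lip:
  fixes f g :: "'d fcoef"
  assumes f: "in_H s f" and g: "in_H s g" and R: "hn s f \<le> R" "hn s g \<le> R"
  shows "in_H s (\<lambda>\<xi>. cubic f \<xi> - cubic g \<xi>)"
    "hn s (\<lambda>\<xi>. cubic f \<xi> - cubic g \<xi>) \<le> 3 * (Ka s TYPE('d))^2 * R^2 * hn s (\<lambda>x. f x - g x)"
proof -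
  note X = T3_3diff_H[OF f f f g g g]
  show "in_H s (\<lambda>\<xi>. cubic f \<xi> - cubic g \<xi>)" unfolding cubic_T3 by (rule X(1))
  have R0: "R \<ge> 0" using R(1) hn_nonneg[of s f] by linarith
  define D where "D = hn s (\<lambda>x. f x - g x)"
  have D0: "D \<ge> 0" unfolding D_def by simp
  have "hn s (\<lambda>\<xi>. cubic f \<xi> - cubic g \<xi>) \<le> (Ka s TYPE('d))^2 * (D * hn s f * hn s f + hn s g * D * hn s f + hn s g * hn s g * D)"
    unfolding cubic_T3 D_def by (rule X(2))
  also have "\<dots> \<le> (Ka s TYPE('d))^2 * (D * R * R + R * D * R + R * R * D)"
    using R R0 D0 by (intro mult_left_mono add_mono mult_mono) auto
  finally show "hn s (\<lambda>\<xi>. cubic f \<xi> - cubic g \<xi>) \<le> 3 * (Ka s TYPE('d))^2 * R^2 * hn s (\<lambda>x. f x - g x)"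
    unfolding D_def by (simp add: power2_eq_square algebra_simps)
qed

lemma quintic_H:
  assumes "in_H s (f :: 'd fcoef)"
  shows "in_H s (quintic f)" "hn s (quintic f) \<le> (Ka s TYPE('d))^4 * (hn s f)^5"
proof -
  note c = cubic_H[OF assms]
  note t = T3_H[OF s c(1) assms assms]
  show "in_H s (quintic f)" unfolding quintic_T3 by (rule t(1))
  have "hn s (quintic f) \<le> (Ka s TYPE('d))^2 * hn s (cubic f) * hn s f * hn s f"
    unfolding quintic_T3 by (rule t(2))
  also have "\<dots> \<le> (Ka s TYPE('d))^2 * ((Ka s TYPE('d))^2 * (hn s f)^3) * hn s f * hn s f"
    using c(2) by (intro mult_right_mono mult_left_mono) auto
  finally show "hn s (quintic f) \<le> (Ka s TYPE('d))^4 * (hn s f)^5"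
    by (simp add: power2_eq_square power3_eq_cube algebra_simps eval_nat_numeral)
qed

lemma quintic_lip:
  fixes f g :: "'d fcoef"
  assumes f: "in_H s f" and g: "in_H s g" and R: "hn s f \<le> R" "hn s g \<le> R"
  shows "in_H s (\<lambda>\<xi>. quintic f \<xi> - quintic g \<xi>)"
    "hn s (\<lambda>\<xi>. quintic f \<xi> - quintic g \<xi>) \<le> 5 * (Ka s TYPE('d))^4 * R^4 * hn s (\<lambda>x. f x - g x)"
proof -
  note cf = cubic_H[OF f] and cg = cubic_H[OF g]
  note X = T3_3diff_H[OF cf(1) f f cg(1) g g]
  show "in_H s (\<lambda>\<xi>. quintic f \<xi> - quintic g \<xi>)" unfolding quintic_T3 by (rule X(1))
  have R0: "R \<ge> 0" using R(1) hn_nonneg[of s f] by linarith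
  define K where "K = Ka s TYPE('d)"
  have K0: "K \<ge> 0" unfolding K_def by (rule Ka_nonneg)
  define D where "D = hn s (\<lambda>x. f x - g x)"
  have D0: "D \<ge> 0" unfolding D_def by simp
  have cd: "hn s (\<lambda>x. cubic f x - cubic g x) \<le> 3 * K^2 * R^2 * D"
    using cubic_lip[OF f g R] unfolding K_def D_def by simp
  have cgR: "hn s (cubic g) \<le> K^2 * R^3"
    using cg(2) R R0 unfolding K_def by (smt (verit) K_def K0 hn_nonneg mult_left_mono power_mono zero_le_power)
  have "hn s (\<lambda>\<xi>. quintic f \<xi> - quintic g \<xi>) \<le> K^2 * (hn s (\<lambda>x. cubic f x - cubic g x) * hn s f * hn s f
      + hn s (cubic g) * D * hn s f + hn s (cubic g) * hn s g * D)"
    unfolding quintic_T3 K_def D_def by (rule X(2))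
  also have "\<dots> \<le> K^2 * ((3 * K^2 * R^2 * D) * R * R + (K^2 * R^3) * D * R + (K^2 * R^3) * R * D)"
    using R R0 D0 cd cgR K0 by (intro mult_left_mono add_mono mult_mono) (auto simp: zero_le_mult_iff)
  finally show "hn s (\<lambda>\<xi>. quintic f \<xi> - quintic g \<xi>) \<le> 5 * (Ka s TYPE('d))^4 * R^4 * hn s (\<lambda>x. f x - g x)"
    unfolding K_def[symmetric] D_def[symmetric] by (simp add: power2_eq_square power3_eq_cube algebra_simps eval_nat_numeral)
qed

end



lemma AE_exists_in_interval:
  assumes ae: "AE x in lborel. P x" and ab: "a < (b::real)"
  shows "\<exists>x\<in>{a<..<b}. P x"
proof (rule ccontr)
  assume "\<not> (\<exists>x\<in>{a<..<b}. P x)"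
  then have sub: "{a<..<b} \<subseteq> {x \<in> space lborel. \<not> P x}" by auto
  from ae obtain N where N: "{x \<in> space lborel. \<not> P x} \<subseteq> N" "emeasure lborel N = 0" "N \<in> sets lborel"
    by (rule AE_E)
  have "emeasure lborel {a<..<b} \<le> emeasure lborel N"
    using sub N by (intro emeasure_mono) auto
  then have "ennreal (b - a) \<le> 0" using N(2) ab by simp
  then show False using ab by simp
qed

lemma semicont:
  fixes v :: "real \<Rightarrow> ('d::finite) fcoef"
  assumes T: "T > 0"
    and cont: "\<And>\<xi>. continuous_on {0..T} (\<lambda>t. v t \<xi>)"
    and ae: "AE t in lborel. t \<in> {0<..<T} \<longrightarrow> in_H r (v t) \<and> hn r (v t) \<le> M0"
    and t0: "t0 \<in> {0..T}"
  shows "in_H r (v t0)" "hn r (v t0) \<le> M0"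
proof -
  obtain t1 where "t1 \<in> {0<..<T}" "in_H r (v t1) \<and> hn r (v t1) \<le> M0"
    using AE_exists_in_interval[OF ae T] by auto
  then have M0: "M0 \<ge> 0" using hn_nonneg[of r "v t1"] by linarith
  have L: "L2_set (\<lambda>\<xi>. sqrt (wt r \<xi>) * cmod (v t0 \<xi>)) F \<le> M0" if fin: "finite F" for F
  proof (rule ccontr)
    define Lf where "Lf = (\<lambda>t. L2_set (\<lambda>\<xi>. sqrt (wt r \<xi>) * cmod (v t \<xi>)) F)"
    assume "\<not> L2_set (\<lambda>\<xi>. sqrt (wt r \<xi>) * cmod (v t0 \<xi>)) F \<le> M0"
    then have gt: "Lf t0 > M0" unfolding Lf_def by simp
    have cL: "continuous_on {0..T} Lf"
      unfolding Lf_def L2_set_def by (intro continuous_intros cont)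
    then have "(Lf \<longlongrightarrow> Lf t0) (at t0 within {0..T})"
      using t0 by (simp add: continuous_on_def)
    then have "eventually (\<lambda>t. Lf t > M0) (at t0 within {0..T})"
      using gt by (rule order_tendstoD(1))
    then obtain d where d: "d > 0" "\<And>t. t \<in> {0..T} \<Longrightarrow> t \<noteq> t0 \<Longrightarrow> dist t t0 < d \<Longrightarrow> Lf t > M0"
      unfolding eventually_at by blast
    obtain a b where ab: "a < b" "{a<..<b} \<subseteq> {0<..<T}" "\<And>t. t \<in> {a<..<b} \<Longrightarrow> t \<noteq> t0 \<and> dist t t0 < d"
    proof (cases "t0 < T")
      case True
      show ?thesis
        by (rule that[of t0 "min T (t0 + d)"]) (use True d t0 in \<open>auto simp: dist_real_def\<close>)
    next
      case False
      then have "t0 = T" using t0 by simp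
      show ?thesis
        by (rule that[of "max 0 (T - d)" T]) (use \<open>t0 = T\<close> d T in \<open>auto simp: dist_real_def\<close>)
    qed
    obtain t where t: "t \<in> {a<..<b}" "t \<in> {0<..<T} \<longrightarrow> in_H r (v t) \<and> hn r (v t) \<le> M0"
      using AE_exists_in_interval[OF ae ab(1)] by blast
    have tT: "t \<in> {0<..<T}" using t(1) ab(2) by auto
    then have g: "in_H r (v t)" "hn r (v t) \<le> M0" using t(2) by auto
    have "Lf t \<le> M0" unfolding Lf_def using H_fin_le[OF g(1)] g(2) by (meson order_trans)
    moreover have "Lf t > M0" using d(2)[of t] ab(3)[OF t(1)] tT by auto
    ultimately show False by simp
  qed
  show "in_H r (v t0)" "hn r (v t0) \<le> M0" using H_finI[OF M0 L] by auto
qed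

lemma cis_lin_deriv:
  "((\<lambda>t. cis (t * c)) has_vector_derivative (complex_of_real c * (\<i> * cis (t * c)))) (at t within S)"
proof -
  have hd: "((\<lambda>t. t * c) has_derivative (\<lambda>h. h * c)) (at t within S)"
    by (auto intro!: derivative_eq_intros)
  have "((\<lambda>x. cis (x * c)) has_derivative (\<lambda>h. (h * c) *\<^sub>R (\<i> * cis (t * c)))) (at t within S)"
    by (rule has_derivative_cis[OF hd])
  then show ?thesis unfolding has_vector_derivative_def
    by (simp add: scaleR_conv_of_real algebra_simps)
qed

lemma v_deriv:
  assumes u: "nls_solution T u" and t: "t \<in> {0..T}"
  shows "((\<lambda>t. schr (-t) (u t) \<xi>) has_vector_derivative (\<i> * schr (-t) (cubic (u t)) \<xi>)) (at t within {0..T})"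
proof -
  obtain D where D: "((\<lambda>s. u s \<xi>) has_vector_derivative D) (at t within {0..T})"
    "\<i> * D - complex_of_real (sqn \<xi>) * u t \<xi> + cubic (u t) \<xi> = 0"
    using u t unfolding nls_solution_def by blast
  have e: "(\<lambda>t. schr (-t) (u t) \<xi>) = (\<lambda>t. cis (t * sqn \<xi>) * u t \<xi>)"
    unfolding schr_def by simp
  have d: "((\<lambda>t. cis (t * sqn \<xi>) * u t \<xi>) has_vector_derivative
      (cis (t * sqn \<xi>) * D + complex_of_real (sqn \<xi>) * (\<i> * cis (t * sqn \<xi>)) * u t \<xi>)) (at t within {0..T})"
    by (rule has_vector_derivative_mult[OF cis_lin_deriv D(1)])
  have iD: "\<i> * D = complex_of_real (sqn \<xi>) * u t \<xi> - cubic (u t) \<xi>"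
    using D(2) by (simp add: algebra_simps eq_diff_eq)
  have DD: "D = - \<i> * (\<i> * D)" by simp
  have "cis (t * sqn \<xi>) * D + complex_of_real (sqn \<xi>) * (\<i> * cis (t * sqn \<xi>)) * u t \<xi>
      = \<i> * schr (-t) (cubic (u t)) \<xi>"
    unfolding schr_def by (subst DD, subst iD) (simp add: algebra_simps)
  with d show ?thesis unfolding e by simp
qed



lemma hn_tri:
  assumes g: "in_H s g" and h: "in_H s h" and le: "\<And>\<xi>. cmod (f \<xi>) \<le> cmod (g \<xi>) + cmod (h \<xi>)"
  shows "in_H s f" "hn s f \<le> hn s g + hn s h"
  using H_dom2[OF g h, of 1 1 f] le by auto

lemma shift_deriv:
  assumes d: "(f has_vector_derivative D) (at (c + \<sigma>) within S)" and sub: "(\<lambda>\<sigma>. c + \<sigma>) ` A \<subseteq> S"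
  shows "((\<lambda>\<sigma>. f (c + \<sigma>)) has_vector_derivative D) (at \<sigma> within A)"
proof -
  have d1: "((\<lambda>\<sigma>. c + \<sigma>) has_vector_derivative 1) (at \<sigma> within A)"
    by (auto intro!: derivative_eq_intros)
  have d2: "(f has_vector_derivative D) (at ((\<lambda>\<sigma>. c + \<sigma>) \<sigma>) within (\<lambda>\<sigma>. c + \<sigma>) ` A)"
    using has_vector_derivative_within_subset[OF d sub] by simp
  show ?thesis using vector_diff_chain_within[OF d1 d2] by (simp add: o_def)
qed

lemma schr_diff_eq: "(\<lambda>\<xi>. schr x a \<xi> - schr y a \<xi>) = schr y (\<lambda>\<xi>. schr (x - y) a \<xi> - a \<xi>)"
proof -
  have h: "schr x a = schr y (schr (x - y) a)" by (simp add: schr_schr)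
  have l: "schr y (\<lambda>\<xi>. schr (x - y) a \<xi> - a \<xi>) \<xi> = schr y (schr (x - y) a) \<xi> - schr y a \<xi>" for \<xi>
    unfolding schr_def by (simp add: algebra_simps)
  show ?thesis by (rule ext) (simp only: l h[symmetric])
qed

context
  fixes s :: real and dummy :: "'d::finite itself"
  assumes s: "s > real CARD('d) / 2"
begin

lemma s_nonneg: "s \<ge> 0"
proof -
  have "real CARD('d) / 2 \<ge> 0" by simp
  then show ?thesis using s by linarith
qed

lemma cont_cubic_schr:
  fixes a :: "'d fcoef"
  assumes a: "in_H (s + 2) a"
  shows "continuous_on A (\<lambda>r. cubic (schr (c + r) a) \<xi>)" "continuous_on A (\<lambda>r. quintic (schr (c + r) a) \<xi>)"
proof -
  define R where "R = hn (s + 2) a"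
  have as: "in_H s a" "hn s a \<le> R" unfolding R_def using in_H_mono[OF a] by auto
  have sa: "in_H s (schr x a)" "hn s (schr x a) \<le> R" for x using as by (auto simp: in_H_schr hn_schr)
  have dd: "in_H s (\<lambda>\<xi>. schr x a \<xi> - schr y a \<xi>) \<and> hn s (\<lambda>\<xi>. schr x a \<xi> - schr y a \<xi>) \<le> dist x y * R" for x y
    unfolding schr_diff_eq using schr_minus_H[OF a, of "x - y"] by (simp add: in_H_schr hn_schr dist_real_def R_def)
  have R0: "R \<ge> 0" unfolding R_def by simp
  define K where "K = Ka s TYPE('d)"
  have "(3 * K^2 * R^2 * R)-lipschitz_on A (\<lambda>r. cubic (schr (c + r) a) \<xi>)"
  proof (rule lipschitz_onI)
    fix x y
    have "dist (cubic (schr (c + x) a) \<xi>) (cubic (schr (c + y) a) \<xi>)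
        = cmod ((\<lambda>\<xi>. cubic (schr (c + x) a) \<xi> - cubic (schr (c + y) a) \<xi>) \<xi>)" by (simp add: dist_norm)
    also have "\<dots> \<le> hn s (\<lambda>\<xi>. cubic (schr (c + x) a) \<xi> - cubic (schr (c + y) a) \<xi>)"
      by (rule pt_bound[OF s_nonneg cubic_lip(1)[OF s sa(1) sa(1) sa(2) sa(2)]])
    also have "\<dots> \<le> 3 * K^2 * R^2 * hn s (\<lambda>\<xi>. schr (c + x) a \<xi> - schr (c + y) a \<xi>)"
      unfolding K_def by (rule cubic_lip(2)[OF s sa(1) sa(1) sa(2) sa(2)])
    also have "\<dots> \<le> 3 * K^2 * R^2 * (dist (c + x) (c + y) * R)"
      using dd[of "c + x" "c + y"] by (intro mult_left_mono) auto
    finally show "dist (cubic (schr (c + x) a) \<xi>) (cubic (schr (c + y) a) \<xi>) \<le> 3 * K^2 * R^2 * R * dist x y"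
      by (simp add: dist_real_def algebra_simps)
  qed (use R0 in auto)
  then show "continuous_on A (\<lambda>r. cubic (schr (c + r) a) \<xi>)" by (rule lipschitz_on_continuous_on)
  have "(5 * K^4 * R^4 * R)-lipschitz_on A (\<lambda>r. quintic (schr (c + r) a) \<xi>)"
  proof (rule lipschitz_onI)
    fix x y
    have "dist (quintic (schr (c + x) a) \<xi>) (quintic (schr (c + y) a) \<xi>)
        = cmod ((\<lambda>\<xi>. quintic (schr (c + x) a) \<xi> - quintic (schr (c + y) a) \<xi>) \<xi>)" by (simp add: dist_norm)
    also have "\<dots> \<le> hn s (\<lambda>\<xi>. quintic (schr (c + x) a) \<xi> - quintic (schr (c + y) a) \<xi>)"
      by (rule pt_bound[OF s_nonneg quintic_lip(1)[OF s sa(1) sa(1) sa(2) sa(2)]])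
    also have "\<dots> \<le> 5 * K^4 * R^4 * hn s (\<lambda>\<xi>. schr (c + x) a \<xi> - schr (c + y) a \<xi>)"
      unfolding K_def by (rule quintic_lip(2)[OF s sa(1) sa(1) sa(2) sa(2)])
    also have "\<dots> \<le> 5 * K^4 * R^4 * (dist (c + x) (c + y) * R)"
      using dd[of "c + x" "c + y"] by (intro mult_left_mono) auto
    finally show "dist (quintic (schr (c + x) a) \<xi>) (quintic (schr (c + y) a) \<xi>) \<le> 5 * K^4 * R^4 * R * dist x y"
      by (simp add: dist_real_def algebra_simps)
  qed (use R0 in auto)
  then show "continuous_on A (\<lambda>r. quintic (schr (c + r) a) \<xi>)" by (rule lipschitz_on_continuous_on)
qed

end



definition C1f :: "real \<Rightarrow> real \<Rightarrow> real" where "C1f K R = K^2 * R^3"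
definition C2f :: "real \<Rightarrow> real \<Rightarrow> real \<Rightarrow> real" where
  "C2f K K2 R = 3 * K^2 * R^2 * (C1f K R + R) + K2^2 * R^3"
definition C3f :: "real \<Rightarrow> real \<Rightarrow> real \<Rightarrow> real" where
  "C3f K K2 R = C2f K K2 R / 2 + K2^2 * R^3 + 3 * K^2 * R^3"
definition C4f :: "real \<Rightarrow> real \<Rightarrow> real \<Rightarrow> real" where
  "C4f K K2 R = K^2 * (3 * C3f K K2 R * R^2 + 3 * K^2 * R^4 * C1f K R)"

lemma schr_apply: "schr t f \<xi> = cis (- t * sqn \<xi>) * f \<xi>"
  unfolding schr_def ..

lemma schr_diff: "schr t (\<lambda>\<xi>. f \<xi> - g \<xi>) \<xi> = schr t f \<xi> - schr t g \<xi>"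
  unfolding schr_def by (simp add: algebra_simps)

lemma schr_add: "schr t (\<lambda>\<xi>. f \<xi> + g \<xi>) \<xi> = schr t f \<xi> + schr t g \<xi>"
  unfolding schr_def by (simp add: algebra_simps)

lemma schr_cmult: "schr t (\<lambda>\<xi>. c * f \<xi>) \<xi> = c * schr t f \<xi>"
  unfolding schr_def by (simp add: algebra_simps)

lemma schr_schr_pt: "schr t (schr t' f) \<xi> = schr (t + t') f \<xi>"
  by (simp add: schr_schr)

lemma lin_deriv: "((\<lambda>\<sigma>. complex_of_real \<sigma> * X) has_vector_derivative X) (at r within S)"
proof -
  have "((\<lambda>\<sigma>. \<sigma> *\<^sub>R X) has_vector_derivative (r *\<^sub>R 0 + 1 *\<^sub>R X)) (at r within S)"
    by (rule has_vector_derivative_scaleR[OF DERIV_ident has_vector_derivative_const])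
  then show ?thesis by (simp add: scaleR_conv_of_real)
qed

lemma prod3_mono:
  fixes x y z X Y Z :: real
  assumes "0 \<le> x" "x \<le> X" "0 \<le> y" "y \<le> Y" "0 \<le> z" "z \<le> Z"
  shows "x * y * z \<le> X * Y * Z"
  using assms by (meson mult_mono order_trans mult_nonneg_nonneg)

lemma main_est:
  fixes u :: "real \<Rightarrow> ('d::finite) fcoef"
  assumes s: "s > real CARD('d) / 2"
    and T: "T > 0" and tau: "0 < \<tau>" "\<tau> \<le> 1" and nT: "real (Suc n) * \<tau> \<le> T"
    and u: "nls_solution T u"
    and vH: "\<And>t. t \<in> {0..T} \<Longrightarrow> in_H (s + 2) (schr (-t) (u t)) \<and> hn (s + 2) (schr (-t) (u t)) \<le> R"
  shows "in_H s (R4 \<tau> n (\<lambda>t. schr (-t) (u t)))"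
    "hn s (R4 \<tau> n (\<lambda>t. schr (-t) (u t))) \<le> C4f (Ka s TYPE('d)) (Ka (s + 2) TYPE('d)) R / 3 * \<tau>^3"
proof -
  define v where "v = (\<lambda>t. schr (-t) (u t))"
  define tn where "tn = real n * \<tau>"
  define a where "a = v tn"
  define K where "K = Ka s TYPE('d)"
  define K2 where "K2 = Ka (s + 2) TYPE('d)"
  define C1 where "C1 = C1f K R"
  define C2 where "C2 = C2f K K2 R"
  define C3 where "C3 = C3f K K2 R"
  define C4 where "C4 = C4f K K2 R"
  have s2: "s + 2 > real CARD('d) / 2" using s by simp
  have s0: "s \<ge> 0" using s_nonneg[OF s] .
  have K0: "K \<ge> 0" unfolding K_def by (rule Ka_nonneg)
  have K20: "K2 \<ge> 0" unfolding K2_def by (rule Ka_nonneg)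
  have R0: "R \<ge> 0"
  proof -
    have "hn (s + 2) (schr (-0) (u 0)) \<le> R" using vH[of 0] T by auto
    then show ?thesis using hn_nonneg[of "s + 2" "schr (-0) (u 0)"] by linarith
  qed
  have tn0: "tn \<ge> 0" unfolding tn_def using tau by simp
  have tnT: "tn + \<tau> \<le> T" using nT unfolding tn_def by (simp add: algebra_simps)
  have inT: "tn + \<sigma> \<in> {0..T}" if "\<sigma> \<in> {0..\<tau>}" for \<sigma> using that tn0 tnT by auto
  have vs: "in_H (s + 2) (v t)" "hn (s + 2) (v t) \<le> R" "in_H s (v t)" "hn s (v t) \<le> R"
    if "t \<in> {0..T}" for t
  proof -
    show a1: "in_H (s + 2) (v t)" "hn (s + 2) (v t) \<le> R" using vH[OF that] unfolding v_def by auto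
    show "in_H s (v t)" "hn s (v t) \<le> R" using in_H_mono[OF a1(1), of s] a1(2) by auto
  qed
  have uv: "u t = schr t (v t)" for t unfolding v_def schr_schr by simp
  have us: "in_H (s + 2) (u t)" "hn (s + 2) (u t) \<le> R" "in_H s (u t)" "hn s (u t) \<le> R"
    if "t \<in> {0..T}" for t
    using vs[OF that] unfolding uv[of t] by (auto simp: in_H_schr hn_schr)
  define Fv where "Fv = (\<lambda>t \<xi>. \<i> * schr (-t) (cubic (u t)) \<xi>)"
  have cubR: "in_H s (cubic f) \<and> hn s (cubic f) \<le> K^2 * R^3" if "in_H s f" "hn s f \<le> R" for f :: "'d fcoef"
  proof -
    note c = cubic_H[OF s that(1)]
    have "(hn s f)^3 \<le> R^3" using that(2) by (intro power_mono) auto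
    then have "K^2 * (hn s f)^3 \<le> K^2 * R^3" by (intro mult_left_mono) auto
    then show ?thesis using c unfolding K_def by auto
  qed
  have cubR2: "in_H (s + 2) (cubic f) \<and> hn (s + 2) (cubic f) \<le> K2^2 * R^3" if "in_H (s + 2) f" "hn (s + 2) f \<le> R" for f :: "'d fcoef"
  proof -
    note c = cubic_H[OF s2 that(1)]
    have "(hn (s + 2) f)^3 \<le> R^3" using that(2) by (intro power_mono) auto
    then have "K2^2 * (hn (s + 2) f)^3 \<le> K2^2 * R^3" by (intro mult_left_mono) auto
    then show ?thesis using c unfolding K2_def by auto
  qed
  have Fv_H: "in_H s (Fv t) \<and> hn s (Fv t) \<le> C1" if "t \<in> {0..T}" for t
  proof -
    note c = cubR[OF us(3,4)[OF that]]
    have i1: "in_H s (schr (-t) (cubic (u t)))" "hn s (schr (-t) (cubic (u t))) \<le> K^2 * R^3"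
      using c by (auto simp: in_H_schr hn_schr)
    note h = hn_scale[OF i1(1), of \<i>]
    show ?thesis using h i1(2) unfolding Fv_def C1_def C1f_def by auto
  qed
  have vder: "((\<lambda>\<sigma>. v (tn + \<sigma>) \<xi>) has_vector_derivative Fv (tn + \<sigma>) \<xi>) (at \<sigma> within {0..h})"
    if "\<sigma> \<in> {0..h}" "h \<le> \<tau>" for \<sigma> h \<xi>
  proof (rule shift_deriv)
    show "((\<lambda>t. v t \<xi>) has_vector_derivative Fv (tn + \<sigma>) \<xi>) (at (tn + \<sigma>) within {0..T})"
      unfolding v_def Fv_def by (rule v_deriv[OF u]) (use tn0 tnT that in auto)
    show "(+) tn ` {0..h} \<subseteq> {0..T}" using tn0 tnT that by auto
  qed

  define b where "b = (\<lambda>\<sigma> \<xi>. v (tn + \<sigma>) \<xi> - a \<xi>)"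
  have C10: "C1 \<ge> 0" unfolding C1_def C1f_def using K0 R0 by simp
  have b_H: "in_H s (b \<sigma>) \<and> hn s (b \<sigma>) \<le> C1 * \<sigma>" if "\<sigma> \<in> {0..\<tau>}" for \<sigma>
  proof -
    have h0: "\<sigma> \<ge> 0" "\<sigma> \<le> \<tau>" using that by auto
    have der: "((\<lambda>\<sigma>. b \<sigma> \<xi>) has_vector_derivative Fv (tn + r) \<xi>) (at r within {0..\<sigma>})"
      if "r \<in> {0..\<sigma>}" for r \<xi>
      unfolding b_def using vder[OF that h0(2), of \<xi>] by (simp add: has_vector_derivative_diff_const)
    have z: "b 0 \<xi> = 0" for \<xi> unfolding b_def a_def by simp
    have bH: "in_H s (Fv (tn + r))" "hn s (Fv (tn + r)) \<le> C1 * r^0" if "r \<in> {0..\<sigma>}" for r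
      using Fv_H[OF inT, of r] that h0 by auto
    show ?thesis using H_mvt[of \<sigma> C1 "\<lambda>\<sigma>. b \<sigma>" "\<lambda>r. Fv (tn + r)", OF h0(1) C10 der z bH] by simp
  qed
  have tn_in: "tn \<in> {0..T}" using inT[of 0] tau by simp
  define U where "U = u tn"
  have Ua: "U = schr tn a" unfolding U_def a_def uv ..
  have Us: "in_H (s + 2) U" "hn (s + 2) U \<le> R" "in_H s U" "hn s U \<le> R"
    unfolding U_def using us[OF tn_in] by auto
  have cU: "in_H (s + 2) (cubic U)" "hn (s + 2) (cubic U) \<le> K2^2 * R^3" using cubR2[OF Us(1,2)] by auto
  have cUs: "in_H s (cubic U)" using in_H_mono[OF cU(1), of s] by simp
  have dF: "in_H s (\<lambda>\<xi>. Fv (tn + r) \<xi> - Fv tn \<xi>) \<and> hn s (\<lambda>\<xi>. Fv (tn + r) \<xi> - Fv tn \<xi>) \<le> C2 * r"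
    if "r \<in> {0..\<tau>}" for r
  proof -
    define Ur where "Ur = u (tn + r)"
    have r0: "r \<ge> 0" using that by simp
    have Urs: "in_H s Ur" "hn s Ur \<le> R" unfolding Ur_def using us[OF inT[OF that]] by auto
    have e1: "Ur \<xi> - U \<xi> = schr (tn + r) (b r) \<xi> + (schr r U \<xi> - U \<xi>)" for \<xi>
      unfolding Ur_def uv[of "tn + r"] Ua b_def schr_diff schr_schr_pt by (simp add: add.commute)
    note br = b_H[OF that]
    have brs: "in_H s (schr (tn + r) (b r))" "hn s (schr (tn + r) (b r)) \<le> C1 * r"
      using br by (auto simp: in_H_schr hn_schr)
    note sm = schr_minus_H[OF Us(1), of r]
    have dU: "in_H s (\<lambda>\<xi>. Ur \<xi> - U \<xi>)" "hn s (\<lambda>\<xi>. Ur \<xi> - U \<xi>) \<le> C1 * r + r * R"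
    proof -
      note X = hn_tri[OF brs(1) sm(1), of "\<lambda>\<xi>. Ur \<xi> - U \<xi>"]
      have pw: "cmod (Ur \<xi> - U \<xi>) \<le> cmod (schr (tn + r) (b r) \<xi>) + cmod (schr r U \<xi> - U \<xi>)" for \<xi>
        unfolding e1 by (rule norm_triangle_ineq)
      show "in_H s (\<lambda>\<xi>. Ur \<xi> - U \<xi>)" using X(1) pw by auto
      have "hn s (\<lambda>\<xi>. Ur \<xi> - U \<xi>) \<le> hn s (schr (tn + r) (b r)) + hn s (\<lambda>\<xi>. schr r U \<xi> - U \<xi>)"
        using X(2) pw by auto
      also have "\<dots> \<le> C1 * r + r * R" using brs(2) sm(2) Us(2) r0
        by (smt (verit) mult_left_mono abs_of_nonneg mult.commute)
      finally show "hn s (\<lambda>\<xi>. Ur \<xi> - U \<xi>) \<le> C1 * r + r * R" .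
    qed
    note cl = cubic_lip[OF s Urs(1) Us(3) Urs(2) Us(4)]
    note sm2 = schr_minus_H[OF cU(1), of r]
    define D where "D = (\<lambda>\<xi>. cubic Ur \<xi> - schr r (cubic U) \<xi>)"
    have DH: "in_H s D" "hn s D \<le> 3 * K^2 * R^2 * (C1 * r + r * R) + r * (K2^2 * R^3)"
    proof -
      have pw: "cmod (D \<xi>) \<le> cmod (cubic Ur \<xi> - cubic U \<xi>) + cmod (schr r (cubic U) \<xi> - cubic U \<xi>)" for \<xi>
      proof -
        have "D \<xi> = (cubic Ur \<xi> - cubic U \<xi>) - (schr r (cubic U) \<xi> - cubic U \<xi>)" unfolding D_def by simp
        then show ?thesis by (metis norm_triangle_ineq4)
      qed
      note X = hn_tri[OF cl(1) sm2(1), of D]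
      show "in_H s D" using X(1) pw by auto
      have "hn s D \<le> hn s (\<lambda>\<xi>. cubic Ur \<xi> - cubic U \<xi>) + hn s (\<lambda>\<xi>. schr r (cubic U) \<xi> - cubic U \<xi>)"
        using X(2) pw by auto
      also have "\<dots> \<le> 3 * K^2 * R^2 * (C1 * r + r * R) + r * (K2^2 * R^3)"
      proof (rule add_mono)
        have "hn s (\<lambda>\<xi>. cubic Ur \<xi> - cubic U \<xi>) \<le> 3 * K^2 * R^2 * hn s (\<lambda>\<xi>. Ur \<xi> - U \<xi>)"
          using cl(2) unfolding K_def .
        also have "\<dots> \<le> 3 * K^2 * R^2 * (C1 * r + r * R)" using dU(2) by (intro mult_left_mono) auto
        finally show "hn s (\<lambda>\<xi>. cubic Ur \<xi> - cubic U \<xi>) \<le> 3 * K^2 * R^2 * (C1 * r + r * R)" .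
        show "hn s (\<lambda>\<xi>. schr r (cubic U) \<xi> - cubic U \<xi>) \<le> r * (K2^2 * R^3)"
          using sm2(2) cU(2) r0 by (smt (verit) mult_left_mono abs_of_nonneg)
      qed
      finally show "hn s D \<le> 3 * K^2 * R^2 * (C1 * r + r * R) + r * (K2^2 * R^3)" .
    qed
    have e2: "Fv (tn + r) \<xi> - Fv tn \<xi> = \<i> * schr (-(tn + r)) D \<xi>" for \<xi>
    proof -
      have "Fv tn \<xi> = \<i> * schr (-(tn + r)) (schr r (cubic U)) \<xi>"
        unfolding Fv_def U_def schr_schr_pt by simp
      then show ?thesis unfolding Fv_def D_def schr_diff Ur_def by (simp add: algebra_simps)
    qed
    have eq: "(\<lambda>\<xi>. Fv (tn + r) \<xi> - Fv tn \<xi>) = (\<lambda>\<xi>. \<i> * schr (-(tn + r)) D \<xi>)"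
      using e2 by auto
    have sD: "in_H s (schr (-(tn + r)) D)" "hn s (schr (-(tn + r)) D) = hn s D"
      using DH(1) by (auto simp: in_H_schr hn_schr)
    note sc = hn_scale[OF sD(1), of \<i>]
    show ?thesis unfolding eq using sc sD(2) DH(2)
      unfolding C2_def C2f_def C1_def[symmetric] by (auto simp: algebra_simps)
  qed
  define cc where "cc = (\<lambda>\<sigma> \<xi>. v (tn + \<sigma>) \<xi> - a \<xi> - complex_of_real \<sigma> * Fv tn \<xi>)"
  have C20: "C2 \<ge> 0" unfolding C2_def C2f_def C1f_def using K0 K20 R0 by simp
  have c_H: "in_H s (cc \<sigma>) \<and> hn s (cc \<sigma>) \<le> C2 * \<sigma>^2 / 2" if "\<sigma> \<in> {0..\<tau>}" for \<sigma>
  proof -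
    have h0: "\<sigma> \<ge> 0" "\<sigma> \<le> \<tau>" using that by auto
    have der: "((\<lambda>\<sigma>. cc \<sigma> \<xi>) has_vector_derivative (\<lambda>\<xi>. Fv (tn + r) \<xi> - Fv tn \<xi>) \<xi>) (at r within {0..\<sigma>})"
      if "r \<in> {0..\<sigma>}" for r \<xi>
    proof -
      have "((\<lambda>\<sigma>. v (tn + \<sigma>) \<xi> - a \<xi> - complex_of_real \<sigma> * Fv tn \<xi>) has_vector_derivative (Fv (tn + r) \<xi> - Fv tn \<xi>)) (at r within {0..\<sigma>})"
        using has_vector_derivative_diff[OF vder[OF that h0(2), of \<xi>, THEN has_vector_derivative_diff_const[THEN iffD2]] lin_deriv]
        by simp
      then show ?thesis unfolding cc_def by simp
    qed
    have z: "cc 0 \<xi> = 0" for \<xi> unfolding cc_def a_def by simp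
    have bH: "in_H s (\<lambda>\<xi>. Fv (tn + r) \<xi> - Fv tn \<xi>)" "hn s (\<lambda>\<xi>. Fv (tn + r) \<xi> - Fv tn \<xi>) \<le> C2 * r^1"
      if "r \<in> {0..\<sigma>}" for r
      using dF[of r] that h0 by auto
    show ?thesis
      using H_mvt[of \<sigma> C2 "\<lambda>\<sigma>. cc \<sigma>" "\<lambda>r \<xi>. Fv (tn + r) \<xi> - Fv tn \<xi>" s 1, OF h0(1) C20 der z bH]
      by (simp add: power2_eq_square)
  qed

  define A where "A = (\<lambda>\<sigma>. schr (tn + \<sigma>) a)"
  define B where "B = (\<lambda>\<sigma>. schr (tn + \<sigma>) (b \<sigma>))"
  define B0 where "B0 = (\<lambda>\<sigma> \<xi>. (\<i> * complex_of_real \<sigma>) * cubic (A \<sigma>) \<xi>)"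
  have AU: "A \<sigma> = schr \<sigma> U" for \<sigma> unfolding A_def Ua schr_schr by (simp add: add.commute)
  have As: "in_H (s + 2) (A \<sigma>)" "hn (s + 2) (A \<sigma>) \<le> R" "in_H s (A \<sigma>)" "hn s (A \<sigma>) \<le> R" for \<sigma>
    unfolding AU using Us by (auto simp: in_H_schr hn_schr)
  have C30: "C3 \<ge> 0" unfolding C3_def C3f_def using C20 K0 K20 R0 by (simp add: C2_def)
  have BB0: "in_H s (\<lambda>\<xi>. B \<sigma> \<xi> - B0 \<sigma> \<xi>) \<and> hn s (\<lambda>\<xi>. B \<sigma> \<xi> - B0 \<sigma> \<xi>) \<le> C3 * \<sigma>^2"
    if "\<sigma> \<in> {0..\<tau>}" for \<sigma>
  proof -
    have h0: "\<sigma> \<ge> 0" using that by simp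
    define Y where "Y = (\<lambda>\<xi>. schr \<sigma> (cubic U) \<xi> - cubic (A \<sigma>) \<xi>)"
    have bcc: "b \<sigma> = (\<lambda>\<xi>. cc \<sigma> \<xi> + complex_of_real \<sigma> * Fv tn \<xi>)" unfolding b_def cc_def by auto
    have sF: "schr (tn + \<sigma>) (Fv tn) \<xi> = \<i> * schr \<sigma> (cubic U) \<xi>" for \<xi>
      unfolding Fv_def schr_cmult schr_schr_pt U_def by simp
    have e: "B \<sigma> \<xi> - B0 \<sigma> \<xi> = schr (tn + \<sigma>) (cc \<sigma>) \<xi> + (\<i> * complex_of_real \<sigma>) * Y \<xi>" for \<xi>
      unfolding B_def B0_def Y_def bcc schr_add schr_cmult sF by (simp add: algebra_simps)
    note cH = c_H[OF that]
    have sc: "in_H s (schr (tn + \<sigma>) (cc \<sigma>))" "hn s (schr (tn + \<sigma>) (cc \<sigma>)) \<le> C2 * \<sigma>^2 / 2"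
      using cH by (auto simp: in_H_schr hn_schr)
    note sm2 = schr_minus_H[OF cU(1), of \<sigma>]
    have UA: "in_H s (\<lambda>x. U x - A \<sigma> x)" "hn s (\<lambda>x. U x - A \<sigma> x) \<le> \<sigma> * R"
    proof -
      note sm = schr_minus_H[OF Us(1), of \<sigma>]
      have pw: "cmod (U x - A \<sigma> x) \<le> 1 * cmod (schr \<sigma> U x - U x)" for x
        unfolding AU by (simp add: norm_minus_commute)
      note X = H_dom1[OF sm(1), of 1 "\<lambda>x. U x - A \<sigma> x"]
      show "in_H s (\<lambda>x. U x - A \<sigma> x)" using X pw by auto
      have "hn s (\<lambda>x. U x - A \<sigma> x) \<le> hn s (\<lambda>x. schr \<sigma> U x - U x)" using X pw by auto
      also have "\<dots> \<le> \<sigma> * R" using sm(2) Us(2) h0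
        by (smt (verit) mult_left_mono abs_of_nonneg)
      finally show "hn s (\<lambda>x. U x - A \<sigma> x) \<le> \<sigma> * R" .
    qed
    note cl = cubic_lip[OF s Us(3) As(3) Us(4) As(4), of \<sigma>]
    have YH: "in_H s Y" "hn s Y \<le> \<sigma> * (K2^2 * R^3) + 3 * K^2 * R^2 * (\<sigma> * R)"
    proof -
      have pw: "cmod (Y \<xi>) \<le> cmod (schr \<sigma> (cubic U) \<xi> - cubic U \<xi>) + cmod (cubic U \<xi> - cubic (A \<sigma>) \<xi>)" for \<xi>
      proof -
        have "Y \<xi> = (schr \<sigma> (cubic U) \<xi> - cubic U \<xi>) + (cubic U \<xi> - cubic (A \<sigma>) \<xi>)" unfolding Y_def by simp
        then show ?thesis by (metis norm_triangle_ineq)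
      qed
      note X = hn_tri[OF sm2(1) cl(1), of Y]
      show "in_H s Y" using X(1) pw by auto
      have "hn s Y \<le> hn s (\<lambda>\<xi>. schr \<sigma> (cubic U) \<xi> - cubic U \<xi>) + hn s (\<lambda>\<xi>. cubic U \<xi> - cubic (A \<sigma>) \<xi>)"
        using X(2) pw by auto
      also have "\<dots> \<le> \<sigma> * (K2^2 * R^3) + 3 * K^2 * R^2 * (\<sigma> * R)"
      proof (rule add_mono)
        show "hn s (\<lambda>\<xi>. schr \<sigma> (cubic U) \<xi> - cubic U \<xi>) \<le> \<sigma> * (K2^2 * R^3)"
          using sm2(2) cU(2) h0 by (smt (verit) mult_left_mono abs_of_nonneg)
        have "hn s (\<lambda>\<xi>. cubic U \<xi> - cubic (A \<sigma>) \<xi>) \<le> 3 * K^2 * R^2 * hn s (\<lambda>x. U x - A \<sigma> x)"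
          using cl(2) unfolding K_def .
        also have "\<dots> \<le> 3 * K^2 * R^2 * (\<sigma> * R)" using UA(2) by (intro mult_left_mono) auto
        finally show "hn s (\<lambda>\<xi>. cubic U \<xi> - cubic (A \<sigma>) \<xi>) \<le> 3 * K^2 * R^2 * (\<sigma> * R)" .
      qed
      finally show "hn s Y \<le> \<sigma> * (K2^2 * R^3) + 3 * K^2 * R^2 * (\<sigma> * R)" .
    qed
    note Ysc = hn_scale[OF YH(1), of "\<i> * complex_of_real \<sigma>"]
    note X = hn_add[OF sc(1) Ysc(1)]
    have eq: "(\<lambda>\<xi>. B \<sigma> \<xi> - B0 \<sigma> \<xi>) = (\<lambda>\<xi>. schr (tn + \<sigma>) (cc \<sigma>) \<xi> + (\<i> * complex_of_real \<sigma>) * Y \<xi>)"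
      using e by auto
    have nY: "cmod (\<i> * complex_of_real \<sigma>) = \<sigma>" using h0 by (simp add: norm_mult)
    have "hn s (\<lambda>\<xi>. B \<sigma> \<xi> - B0 \<sigma> \<xi>) \<le> C2 * \<sigma>^2 / 2 + \<sigma> * (\<sigma> * (K2^2 * R^3) + 3 * K^2 * R^2 * (\<sigma> * R))"
      unfolding eq using X(2) sc(2) Ysc(2) YH(2) nY h0
      by (smt (verit) mult_left_mono)
    also have "\<dots> = C3 * \<sigma>^2" unfolding C3_def C3f_def C2_def
      by (simp add: power2_eq_square power3_eq_cube algebra_simps)
    finally show ?thesis using X(1) eq by simp
  qed

  define E where "E = (\<lambda>\<sigma> \<xi>. cubic (u (tn + \<sigma>)) \<xi> - cubic (A \<sigma>) \<xi>
      - (T3 (B0 \<sigma>) (A \<sigma>) (A \<sigma>) \<xi> + T3 (A \<sigma>) (B0 \<sigma>) (A \<sigma>) \<xi> + T3 (A \<sigma>) (A \<sigma>) (B0 \<sigma>) \<xi>))"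
  have C40: "C4 \<ge> 0" unfolding C4_def C4f_def using C30 C10 K0 R0 by (simp add: C3_def C1_def)
  have E_H: "in_H s (E \<sigma>) \<and> hn s (E \<sigma>) \<le> C4 * \<sigma>^2" if "\<sigma> \<in> {0..\<tau>}" for \<sigma>
  proof -
    have h0: "\<sigma> \<ge> 0" using that by simp
    define ut where "ut = u (tn + \<sigma>)"
    define Aa Bb Bz where "Aa = A \<sigma>" and "Bb = B \<sigma>" and "Bz = B0 \<sigma>"
    have uAB: "ut = (\<lambda>\<xi>. Aa \<xi> + Bb \<xi>)"
      unfolding ut_def Aa_def Bb_def A_def B_def uv[of "tn + \<sigma>"] b_def schr_diff[symmetric]
      by (auto simp: schr_def algebra_simps)
    have utH: "in_H s ut" "hn s ut \<le> R" unfolding ut_def using us[OF inT[OF that]] by auto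
    have AH: "in_H s Aa" "hn s Aa \<le> R" unfolding Aa_def using As by auto
    have BH: "in_H s Bb" "hn s Bb \<le> C1 * \<sigma>" unfolding Bb_def B_def using b_H[OF that] by (auto simp: in_H_schr hn_schr)
    have cA: "in_H s (cubic Aa)" "hn s (cubic Aa) \<le> K^2 * R^3" using cubR[OF AH] by auto
    note Bzs = hn_scale[OF cA(1), of "\<i> * complex_of_real \<sigma>"]
    have BzE: "Bz = (\<lambda>\<xi>. (\<i> * complex_of_real \<sigma>) * cubic Aa \<xi>)" unfolding Bz_def B0_def Aa_def ..
    have BzH: "in_H s Bz" "hn s Bz \<le> \<sigma> * (K^2 * R^3)"
    proof -
      show "in_H s Bz" unfolding BzE by (rule Bzs(1))
      have "hn s Bz \<le> cmod (\<i> * complex_of_real \<sigma>) * hn s (cubic Aa)" unfolding BzE by (rule Bzs(2))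
      also have "\<dots> \<le> \<sigma> * (K^2 * R^3)" using h0 cA(2) by (simp add: norm_mult mult_left_mono)
      finally show "hn s Bz \<le> \<sigma> * (K^2 * R^3)" .
    qed
    have dBH: "in_H s (\<lambda>x. Bb x - Bz x)" "hn s (\<lambda>x. Bb x - Bz x) \<le> C3 * \<sigma>^2"
      using BB0[OF that] unfolding Bb_def Bz_def by auto
    have uA: "(\<lambda>x. ut x - Aa x) = Bb" unfolding uAB by simp
    have AA: "(\<lambda>x. Aa x - Aa x) = (\<lambda>_. 0)" by simp
    have Ez: "hn s (\<lambda>x. Aa x - Aa x) = 0" unfolding AA by (rule H_zero)
    have cubdiff: "(\<lambda>\<xi>. cubic ut \<xi> - cubic Aa \<xi>) = (\<lambda>\<xi>. T3 Bb ut ut \<xi> + T3 Aa Bb ut \<xi> + T3 Aa Aa Bb \<xi>)"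
      unfolding cubic_T3 T3_3diff[OF s utH(1) utH(1) utH(1) AH(1) AH(1) AH(1)] uA ..
    have Eeq: "E \<sigma> = (\<lambda>\<xi>. (T3 Bb ut ut \<xi> - T3 Bz Aa Aa \<xi>) + (T3 Aa Bb ut \<xi> - T3 Aa Bz Aa \<xi>) + (T3 Aa Aa Bb \<xi> - T3 Aa Aa Bz \<xi>))"
    proof
      fix \<xi>
      have "cubic ut \<xi> - cubic Aa \<xi> = T3 Bb ut ut \<xi> + T3 Aa Bb ut \<xi> + T3 Aa Aa Bb \<xi>"
        using fun_cong[OF cubdiff, of \<xi>] by simp
      then show "E \<sigma> \<xi> = (T3 Bb ut ut \<xi> - T3 Bz Aa Aa \<xi>) + (T3 Aa Bb ut \<xi> - T3 Aa Bz Aa \<xi>) + (T3 Aa Aa Bb \<xi> - T3 Aa Aa Bz \<xi>)"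
        unfolding E_def ut_def[symmetric] Aa_def[symmetric] Bz_def[symmetric] by (simp add: algebra_simps)
    qed
    note X1 = T3_3diff_H[OF s BH(1) utH(1) utH(1) BzH(1) AH(1) AH(1)]
    note X2 = T3_3diff_H[OF s AH(1) BH(1) utH(1) AH(1) BzH(1) AH(1)]
    note X3 = T3_3diff_H[OF s AH(1) AH(1) BH(1) AH(1) AH(1) BzH(1)]
    note S12 = hn_add[OF X1(1) X2(1)]
    note S123 = hn_add[OF S12(1) X3(1)]
    have nn: "0 \<le> hn s f" for f :: "'d fcoef" by simp
    have b1: "hn s (\<lambda>\<xi>. T3 Bb ut ut \<xi> - T3 Bz Aa Aa \<xi>) \<le> K^2 * (C3 * \<sigma>^2 * R * R + \<sigma> * (K^2 * R^3) * (C1 * \<sigma>) * R + \<sigma> * (K^2 * R^3) * R * (C1 * \<sigma>))"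
    proof -
      have "hn s (\<lambda>\<xi>. T3 Bb ut ut \<xi> - T3 Bz Aa Aa \<xi>) \<le> K^2 * (hn s (\<lambda>x. Bb x - Bz x) * hn s ut * hn s ut
          + hn s Bz * hn s (\<lambda>x. ut x - Aa x) * hn s ut + hn s Bz * hn s Aa * hn s (\<lambda>x. ut x - Aa x))"
        using X1(2) unfolding K_def .
      also have "\<dots> \<le> K^2 * (C3 * \<sigma>^2 * R * R + \<sigma> * (K^2 * R^3) * (C1 * \<sigma>) * R + \<sigma> * (K^2 * R^3) * R * (C1 * \<sigma>))"
        unfolding uA
        by (intro mult_left_mono add_mono prod3_mono nn dBH(2) utH(2) BzH(2) BH(2) AH(2)) auto
      finally show ?thesis .
    qed
    have b2: "hn s (\<lambda>\<xi>. T3 Aa Bb ut \<xi> - T3 Aa Bz Aa \<xi>) \<le> K^2 * (0 * (C1 * \<sigma>) * R + R * (C3 * \<sigma>^2) * R + R * (\<sigma> * (K^2 * R^3)) * (C1 * \<sigma>))"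
    proof -
      have "hn s (\<lambda>\<xi>. T3 Aa Bb ut \<xi> - T3 Aa Bz Aa \<xi>) \<le> K^2 * (hn s (\<lambda>x. Aa x - Aa x) * hn s Bb * hn s ut
          + hn s Aa * hn s (\<lambda>x. Bb x - Bz x) * hn s ut + hn s Aa * hn s Bz * hn s (\<lambda>x. ut x - Aa x))"
        using X2(2) unfolding K_def .
      also have "\<dots> \<le> K^2 * (0 * (C1 * \<sigma>) * R + R * (C3 * \<sigma>^2) * R + R * (\<sigma> * (K^2 * R^3)) * (C1 * \<sigma>))"
        unfolding uA Ez
        by (intro mult_left_mono add_mono prod3_mono nn dBH(2) utH(2) BzH(2) BH(2) AH(2)) auto
      finally show ?thesis .
    qed
    have b3: "hn s (\<lambda>\<xi>. T3 Aa Aa Bb \<xi> - T3 Aa Aa Bz \<xi>) \<le> K^2 * (0 * R * (C1 * \<sigma>) + R * 0 * (C1 * \<sigma>) + R * R * (C3 * \<sigma>^2))"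
    proof -
      have "hn s (\<lambda>\<xi>. T3 Aa Aa Bb \<xi> - T3 Aa Aa Bz \<xi>) \<le> K^2 * (hn s (\<lambda>x. Aa x - Aa x) * hn s Aa * hn s Bb
          + hn s Aa * hn s (\<lambda>x. Aa x - Aa x) * hn s Bb + hn s Aa * hn s Aa * hn s (\<lambda>x. Bb x - Bz x))"
        using X3(2) unfolding K_def .
      also have "\<dots> \<le> K^2 * (0 * R * (C1 * \<sigma>) + R * 0 * (C1 * \<sigma>) + R * R * (C3 * \<sigma>^2))"
        unfolding Ez
        by (intro mult_left_mono add_mono prod3_mono nn dBH(2) utH(2) BzH(2) BH(2) AH(2)) auto
      finally show ?thesis .
    qed
    show ?thesis
    proof
      show "in_H s (E \<sigma>)" unfolding Eeq by (rule S123(1))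
      have "hn s (E \<sigma>) \<le> K^2 * (C3 * \<sigma>^2 * R * R + \<sigma> * (K^2 * R^3) * (C1 * \<sigma>) * R + \<sigma> * (K^2 * R^3) * R * (C1 * \<sigma>))
          + K^2 * (0 * (C1 * \<sigma>) * R + R * (C3 * \<sigma>^2) * R + R * (\<sigma> * (K^2 * R^3)) * (C1 * \<sigma>))
          + K^2 * (0 * R * (C1 * \<sigma>) + R * 0 * (C1 * \<sigma>) + R * R * (C3 * \<sigma>^2))"
        unfolding Eeq using S123(2) S12(2) b1 b2 b3 by linarith
      also have "\<dots> = C4 * \<sigma>^2" unfolding C4_def C4f_def C3_def[symmetric] C1_def[symmetric]
        by (simp add: power2_eq_square power3_eq_cube algebra_simps eval_nat_numeral)
      finally show "hn s (E \<sigma>) \<le> C4 * \<sigma>^2" .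
    qed
  qed

  define G1 where "G1 = (\<lambda>r \<xi>. schr (-(tn + r)) (cubic (schr (tn + r) a)) \<xi>)"
  define G2 where "G2 = (\<lambda>r \<xi>. complex_of_real r * schr (-(tn + r)) (quintic (schr (tn + r) a)) \<xi>)"
  define Phi where "Phi = (\<lambda>h \<xi>. v (tn + h) \<xi> - a \<xi> - \<i> * integral {0..h} (\<lambda>r. G1 r \<xi>) - (- integral {0..h} (\<lambda>r. G2 r \<xi>)))"
  have R4eq: "R4 \<tau> n v = Phi \<tau>"
  proof -
    have "real (Suc n) * \<tau> = tn + \<tau>" unfolding tn_def by (simp add: algebra_simps)
    then show ?thesis unfolding R4_def I1_def I2_def Phi_def G1_def G2_def a_def tn_def by simp
  qed
  have as2: "in_H (s + 2) a" using vs(1)[OF tn_in] unfolding a_def .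
  have cG1: "continuous_on {0..\<tau>} (\<lambda>r. G1 r \<xi>)" for \<xi>
  proof -
    have e: "(\<lambda>r. G1 r \<xi>) = (\<lambda>r. cis (- (-(tn + r)) * sqn \<xi>) * cubic (schr (tn + r) a) \<xi>)"
      by (rule ext) (unfold G1_def, rule schr_apply)
    show ?thesis unfolding e by (intro continuous_intros cont_cubic_schr(1)[OF s as2])
  qed
  have cG2: "continuous_on {0..\<tau>} (\<lambda>r. G2 r \<xi>)" for \<xi>
  proof -
    have e: "(\<lambda>r. G2 r \<xi>) = (\<lambda>r. complex_of_real r * (cis (- (-(tn + r)) * sqn \<xi>) * quintic (schr (tn + r) a) \<xi>))"
      by (rule ext) (unfold G2_def, subst schr_apply, rule refl)
    show ?thesis unfolding e by (intro continuous_intros cont_cubic_schr(2)[OF s as2])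
  qed
  define Phi' where "Phi' = (\<lambda>\<sigma> \<xi>. Fv (tn + \<sigma>) \<xi> - \<i> * G1 \<sigma> \<xi> - (- G2 \<sigma> \<xi>))"
  have dPhi: "((\<lambda>h. Phi h \<xi>) has_vector_derivative Phi' \<sigma> \<xi>) (at \<sigma> within {0..\<tau>})"
    if "\<sigma> \<in> {0..\<tau>}" for \<sigma> \<xi>
  proof -
    have d1: "((\<lambda>h. v (tn + h) \<xi> - a \<xi>) has_vector_derivative Fv (tn + \<sigma>) \<xi>) (at \<sigma> within {0..\<tau>})"
      using vder[OF that order_refl, of \<xi>] by (simp add: has_vector_derivative_diff_const)
    have d2: "((\<lambda>h. \<i> * integral {0..h} (\<lambda>r. G1 r \<xi>)) has_vector_derivative \<i> * G1 \<sigma> \<xi>) (at \<sigma> within {0..\<tau>})"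
      by (intro has_vector_derivative_mult_right integral_has_vector_derivative cG1 that)
    have d3: "((\<lambda>h. - integral {0..h} (\<lambda>r. G2 r \<xi>)) has_vector_derivative - G2 \<sigma> \<xi>) (at \<sigma> within {0..\<tau>})"
      by (intro has_vector_derivative_minus integral_has_vector_derivative cG2 that)
    show ?thesis unfolding Phi_def Phi'_def
      by (intro has_vector_derivative_diff d1 d2 d3)
  qed
  have Phi'eq: "Phi' \<sigma> = (\<lambda>\<xi>. schr (-(tn + \<sigma>)) (\<lambda>\<xi>. \<i> * E \<sigma> \<xi>) \<xi>)" if "\<sigma> \<in> {0..\<tau>}" for \<sigma>
  proof
    fix \<xi>
    have Ah: "in_H s (A \<sigma>)" using As by auto
    have B0E: "B0 \<sigma> = (\<lambda>\<xi>. (\<i> * complex_of_real \<sigma>) * cubic (A \<sigma>) \<xi>)" unfolding B0_def ..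
    have L: "T3 (B0 \<sigma>) (A \<sigma>) (A \<sigma>) \<xi> + T3 (A \<sigma>) (B0 \<sigma>) (A \<sigma>) \<xi> + T3 (A \<sigma>) (A \<sigma>) (B0 \<sigma>) \<xi>
        = (\<i> * complex_of_real \<sigma>) * quintic (A \<sigma>) \<xi>"
    proof -
      have s1: "T3 (B0 \<sigma>) (A \<sigma>) (A \<sigma>) = (\<lambda>\<xi>. (\<i> * complex_of_real \<sigma>) * T3 (cubic (A \<sigma>)) (A \<sigma>) (A \<sigma>) \<xi>)"
        unfolding B0E by (rule T3_scale1[OF s])
      have s2: "T3 (A \<sigma>) (B0 \<sigma>) (A \<sigma>) = (\<lambda>\<xi>. cnj (\<i> * complex_of_real \<sigma>) * T3 (A \<sigma>) (cubic (A \<sigma>)) (A \<sigma>) \<xi>)"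
        unfolding B0E by (rule T3_scale2[OF s])
      have s3: "T3 (A \<sigma>) (A \<sigma>) (B0 \<sigma>) = (\<lambda>\<xi>. (\<i> * complex_of_real \<sigma>) * T3 (A \<sigma>) (A \<sigma>) (cubic (A \<sigma>)) \<xi>)"
        unfolding B0E by (rule T3_scale3[OF s])
      show ?thesis unfolding s1 s2 s3 quintic_id[OF s Ah] by (simp add: algebra_simps)
    qed
    have G1e: "G1 \<sigma> = schr (-(tn + \<sigma>)) (cubic (A \<sigma>))" unfolding G1_def A_def ..
    have G2e: "G2 \<sigma> \<xi> = complex_of_real \<sigma> * schr (-(tn + \<sigma>)) (quintic (A \<sigma>)) \<xi>" unfolding G2_def A_def ..
    show "Phi' \<sigma> \<xi> = schr (-(tn + \<sigma>)) (\<lambda>\<xi>. \<i> * E \<sigma> \<xi>) \<xi>"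
      unfolding Phi'_def Fv_def G1e G2e E_def schr_def
      using L by (simp add: algebra_simps)
  qed
  have Phi'H: "in_H s (Phi' \<sigma>)" "hn s (Phi' \<sigma>) \<le> C4 * \<sigma>^2" if "\<sigma> \<in> {0..\<tau>}" for \<sigma>
  proof -
    note e = E_H[OF that]
    note sc = hn_scale[OF e[THEN conjunct1], of \<i>]
    show "in_H s (Phi' \<sigma>)" unfolding Phi'eq[OF that] using sc(1)
      by (simp add: in_H_schr eta_contract_eq)
    have "hn s (Phi' \<sigma>) = hn s (\<lambda>\<xi>. \<i> * E \<sigma> \<xi>)"
      unfolding Phi'eq[OF that] using hn_schr[of s "-(tn + \<sigma>)" "\<lambda>\<xi>. \<i> * E \<sigma> \<xi>"] by (simp add: eta_contract_eq)
    also have "\<dots> \<le> C4 * \<sigma>^2" using sc(2) e by simp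
    finally show "hn s (Phi' \<sigma>) \<le> C4 * \<sigma>^2" .
  qed
  have Phi0: "Phi 0 \<xi> = 0" for \<xi> unfolding Phi_def a_def by simp
  have tau0: "\<tau> \<ge> 0" using tau by simp
  note MV = H_mvt[of \<tau> C4 Phi Phi' s 2, OF tau0 C40 dPhi Phi0 Phi'H]
  have final: "in_H s (R4 \<tau> n v) \<and> hn s (R4 \<tau> n v) \<le> C4 / 3 * \<tau>^3"
    unfolding R4eq using MV by (simp add: eval_nat_numeral)
  then show "in_H s (R4 \<tau> n (\<lambda>t. schr (-t) (u t)))"
    "hn s (R4 \<tau> n (\<lambda>t. schr (-t) (u t))) \<le> C4f (Ka s TYPE('d)) (Ka (s + 2) TYPE('d)) R / 3 * \<tau>^3"
    unfolding v_def C4_def K_def K2_def by auto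
qed



theorem lemma3p2:
  fixes \<gamma> M :: real
  assumes "\<gamma> > real CARD('d::finite) / 2"
  shows "\<exists>C. \<forall>T \<tau> (n::nat) (u :: real \<Rightarrow> 'd fcoef).
     T > 0 \<and> 0 < \<tau> \<and> \<tau> \<le> 1 \<and> real (Suc n) * \<tau> \<le> T \<and> nls_solution T u \<and>
     (AE t in lborel. t \<in> {0<..<T} \<longrightarrow>
        in_H (\<gamma> + 2) (schr (- t) (u t)) \<and> normH (\<gamma> + 2) (schr (- t) (u t)) \<le> M)
     \<longrightarrow> in_H \<gamma> (R4 \<tau> n (\<lambda>t. schr (- t) (u t))) \<and>
         normH \<gamma> (R4 \<tau> n (\<lambda>t. schr (- t) (u t))) \<le> C * \<tau> ^ 3"
proof -
  define c0 where "c0 = (2 * pi) powr (real CARD('d) / 2)"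
  have c0: "c0 > 0" unfolding c0_def by simp
  define R where "R = M / c0"
  define C where "C = c0 * (C4f (Ka \<gamma> TYPE('d)) (Ka (\<gamma> + 2) TYPE('d)) R / 3)"
  show ?thesis
  proof (intro exI[of _ C] allI impI)
    fix T \<tau> n and u :: "real \<Rightarrow> 'd fcoef"
    assume H: "T > 0 \<and> 0 < \<tau> \<and> \<tau> \<le> 1 \<and> real (Suc n) * \<tau> \<le> T \<and> nls_solution T u \<and>
     (AE t in lborel. t \<in> {0<..<T} \<longrightarrow>
        in_H (\<gamma> + 2) (schr (- t) (u t)) \<and> normH (\<gamma> + 2) (schr (- t) (u t)) \<le> M)"
    then have T: "T > 0" and tau: "0 < \<tau>" "\<tau> \<le> 1" and nT: "real (Suc n) * \<tau> \<le> T"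
      and u: "nls_solution T u"
      and ae: "AE t in lborel. t \<in> {0<..<T} \<longrightarrow>
        in_H (\<gamma> + 2) (schr (- t) (u t)) \<and> normH (\<gamma> + 2) (schr (- t) (u t)) \<le> M"
      by auto
    define v where "v = (\<lambda>t. schr (- t) (u t))"
    have ae': "AE t in lborel. t \<in> {0<..<T} \<longrightarrow> in_H (\<gamma> + 2) (v t) \<and> hn (\<gamma> + 2) (v t) \<le> R"
      using ae
    proof (rule eventually_mono)
      fix t assume "t \<in> {0<..<T} \<longrightarrow> in_H (\<gamma> + 2) (schr (- t) (u t)) \<and> normH (\<gamma> + 2) (schr (- t) (u t)) \<le> M"
      then show "t \<in> {0<..<T} \<longrightarrow> in_H (\<gamma> + 2) (v t) \<and> hn (\<gamma> + 2) (v t) \<le> R"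
        unfolding v_def R_def normH_hn c0_def[symmetric] using c0 by (auto simp: field_simps)
    qed
    have cont: "continuous_on {0..T} (\<lambda>t. v t \<xi>)" for \<xi>
      unfolding v_def by (rule continuous_on_vector_derivative) (rule v_deriv[OF u])
    have vH: "in_H (\<gamma> + 2) (schr (-t) (u t)) \<and> hn (\<gamma> + 2) (schr (-t) (u t)) \<le> R" if "t \<in> {0..T}" for t
      using semicont[OF T cont ae' that] unfolding v_def by auto
    note ME = main_est[OF assms T tau nT u vH]
    show "in_H \<gamma> (R4 \<tau> n (\<lambda>t. schr (- t) (u t))) \<and>
         normH \<gamma> (R4 \<tau> n (\<lambda>t. schr (- t) (u t))) \<le> C * \<tau> ^ 3"
    proof
      show "in_H \<gamma> (R4 \<tau> n (\<lambda>t. schr (- t) (u t)))" by (rule ME(1))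
      have "normH \<gamma> (R4 \<tau> n (\<lambda>t. schr (- t) (u t))) = c0 * hn \<gamma> (R4 \<tau> n (\<lambda>t. schr (- t) (u t)))"
        unfolding normH_hn c0_def ..
      also have "\<dots> \<le> c0 * (C4f (Ka \<gamma> TYPE('d)) (Ka (\<gamma> + 2) TYPE('d)) R / 3 * \<tau>^3)"
        using ME(2) c0 by (intro mult_left_mono) auto
      also have "\<dots> = C * \<tau>^3" unfolding C_def by simp
      finally show "normH \<gamma> (R4 \<tau> n (\<lambda>t. schr (- t) (u t))) \<le> C * \<tau> ^ 3" .
    qed
  qed
qed


end
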